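(* Let $d\ge 2$, $\varepsilon\in(0,1)$, $s=1+\varepsilon$, and let $x,z\in\mathcal X$. Then: (1) The following deterministic inequality holds: $$\varepsilon-\delta_2(d,\varepsilon)\;\le\;K_s(x,z)-\bigl(1-d_G(x,z)\bigr)\;\le\;\varepsilon+\delta_1(d,\varepsilon),$$ where $$\delta_1(d,\varepsilon)=\frac{e^{-d\varepsilon^2/16}}{\sqrt d}-\frac12\,\frac{e^{-\varepsilon d/2}(1+\varepsilon)^{d/2}}{\sqrt d},\qquad \delta_2(d,\varepsilon)=\frac{e^{-d\varepsilon^2/16}}{\sqrt d}+(1+\varepsilon)e^{-d\varepsilon^2/8}.$$ (2) For every fixed $\varepsilon\in(0,1)$, $\delta_1(d,\varepsilon)\to0$ and $\delta_2(d,\varepsilon)\to0$ as $d\to\infty$, so that $K_s(x,z)-\bigl(s-d_G(x,z)\bigr)\to 0$ as $d\to\infty$. (3) $K_s$ is symmetric and positive semi-definite on $\mathcal X$, and it is $G$-invariant: $K_s(gx,g'z)=K_s(x,z)$ for all $g,g'\in G$, $x,z\in\mathcal X$.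
   Context: Let $\mathcal X\subset\mathbb S^{d-1}$ (unit sphere of $\mathbb R^d$). Let $G$ be a compact group acting on $\mathbb R^d$ by orthogonal (unitary) linear maps, with normalized Haar measure $\mu$. Fix $\varepsilon\in(0,1)$ and set $s=1+\varepsilon$. A random template $t$ is drawn as follows: draw $\nu\sim\mathcal N(0,\tfrac1d I_d)$; set $t=\nu$ if $\|\nu\|_2^2<1+\varepsilon$, and $t=\perp$ (a null template) otherwise. For $x\in\mathbb R^d$, a template $t\ne\perp$ and $\tau\in\mathbb R$, define $\psi(x,t,\tau)=\mu(\{g\in G:\langle x,gt\rangle\le\tau\})$ (the CDF of $\langle x,gt\rangle$ with $g\sim\mu$), and by convention $\psi(x,\perp,\tau)=0$. Define the kernel $$K_s(x,z)=\mathbb E_t\int_{-s}^{s}\psi(x,t,\tau)\,\psi(z,t,\tau)\,d\tau,$$ and the orbit distance $$d_G(x,z)=\frac{1}{\sqrt{2\pi d}}\int_G\int_G\|gx-g'z\|_2\,d\mu(g)\,d\mu(g').$$ *)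

theory Defs
  imports "HOL-Probability.Probability"
begin

text \<open>The dimension d is CARD('n); vectors of R^d are real^'n.
  The compact group G is represented by its image in O(d): a compact set of
  orthogonal matrices closed under identity, products and inverses (transposes),
  and mu is its normalized Haar measure: a Borel probability measure on G that is
  invariant under left translation.\<close>

definition orth_group_haar :: "(real^'n^'n) set \<Rightarrow> (real^'n^'n) measure \<Rightarrow> bool" where
  "orth_group_haar G \<mu> \<longleftrightarrow>
     compact G \<and> (\<forall>g\<in>G. orthogonal_matrix g) \<and> mat 1 \<in> G \<and>
     (\<forall>g\<in>G. \<forall>h\<in>G. g ** h \<in> G) \<and> (\<forall>g\<in>G. transpose g \<in> G) \<and>
     prob_space \<mu> \<and> space \<mu> = G \<and> sets \<mu> = sets (restrict_space borel G) \<and>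
     (\<forall>g\<in>G. \<forall>A\<in>sets \<mu>. emeasure \<mu> ((\<lambda>h. g ** h) -` A \<inter> G) = emeasure \<mu> A)"

definition gauss_tmpl :: "(real^'n) measure" where
  "gauss_tmpl = density lborel (\<lambda>v. ennreal
      ((real CARD('n) / (2 * pi)) powr (real CARD('n) / 2) *
       exp (- real CARD('n) * (norm v)\<^sup>2 / 2)))"

definition template :: "real \<Rightarrow> real^'n \<Rightarrow> (real^'n) option" where
  "template \<epsilon> \<nu> = (if (norm \<nu>)\<^sup>2 < 1 + \<epsilon> then Some \<nu> else None)"

fun psi :: "(real^'n^'n) measure \<Rightarrow> real^'n \<Rightarrow> (real^'n) option \<Rightarrow> real \<Rightarrow> real" where
  "psi \<mu> x None \<tau> = 0"
| "psi \<mu> x (Some t) \<tau> = measure \<mu> {g \<in> space \<mu>. x \<bullet> (g *v t) \<le> \<tau>}"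

definition K_s :: "(real^'n^'n) measure \<Rightarrow> real \<Rightarrow> real^'n \<Rightarrow> real^'n \<Rightarrow> real" where
  "K_s \<mu> \<epsilon> x z = (\<integral>\<nu>. (LBINT \<tau>=-(1+\<epsilon>)..(1+\<epsilon>).
        psi \<mu> x (template \<epsilon> \<nu>) \<tau> * psi \<mu> z (template \<epsilon> \<nu>) \<tau>) \<partial>gauss_tmpl)"

definition d_G :: "(real^'n^'n) measure \<Rightarrow> real^'n \<Rightarrow> real^'n \<Rightarrow> real" where
  "d_G \<mu> x z = 1 / sqrt (2 * pi * real CARD('n)) *
      (\<integral>g. (\<integral>g'. norm (g *v x - g' *v z) \<partial>\<mu>) \<partial>\<mu>)"

definition delta1 :: "nat \<Rightarrow> real \<Rightarrow> real" where
  "delta1 d \<epsilon> = exp (- real d * \<epsilon>\<^sup>2 / 16) / sqrt (real d)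
      - 1/2 * (exp (- \<epsilon> * real d / 2) * (1 + \<epsilon>) powr (real d / 2)) / sqrt (real d)"

definition delta2 :: "nat \<Rightarrow> real \<Rightarrow> real" where
  "delta2 d \<epsilon> = exp (- real d * \<epsilon>\<^sup>2 / 16) / sqrt (real d)
      + (1 + \<epsilon>) * exp (- real d * \<epsilon>\<^sup>2 / 8)"

end

theory Submission
  imports Defs
begin

definition gsig :: "nat \<Rightarrow> real" where "gsig d = 1 / sqrt (real (max 1 d))"

lemma gsig_pos: "gsig d > 0" by (simp add: gsig_def)
definition N1 :: "nat \<Rightarrow> real measure" where
  "N1 d = density lborel (normal_density 0 (gsig d))"
definition Vm :: "('a::euclidean_space \<Rightarrow> real) \<Rightarrow> 'a" where
  "Vm \<omega> = (\<Sum>b\<in>Basis. \<omega> b *\<^sub>R b)"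

lemma prob_space_N1: "prob_space (N1 d)"
  unfolding N1_def by (rule prob_space_normal_density) (rule gsig_pos)

lemma sets_N1[simp, measurable_cong]: "sets (N1 d) = sets borel"
  by (simp add: N1_def)

lemma space_N1[simp]: "space (N1 d) = UNIV"
  by (simp add: N1_def)

lemma N1P: "product_prob_space (\<lambda>_. N1 d)"
  by (simp add: product_prob_space_def product_sigma_finite_def prob_space_N1
      prob_space_imp_sigma_finite product_prob_space_axioms_def)

lemma Vm_measurable[measurable]:
  "(Vm :: ('a::euclidean_space \<Rightarrow> real) \<Rightarrow> 'a) \<in> measurable (PiM Basis M) borel"
  if "\<And>b. sets (M b) = sets borel"
  unfolding Vm_def using that by measurable

lemma Vm_inner: "b \<in> Basis \<Longrightarrow> Vm \<omega> \<bullet> b = \<omega> (b::'a::euclidean_space)"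
  unfolding Vm_def by (simp add: inner_sum_left inner_Basis if_distrib cong: if_cong)

lemma norm2_basis: "(norm (v::'a::euclidean_space))\<^sup>2 = (\<Sum>b\<in>Basis. (v \<bullet> b)\<^sup>2)"
proof -
  have "(norm v)\<^sup>2 = v \<bullet> v" by (simp add: power2_norm_eq_inner)
  also have "\<dots> = (\<Sum>b\<in>Basis. (v \<bullet> b) * (v \<bullet> b))" by (rule euclidean_inner)
  finally show ?thesis by (simp add: power2_eq_square)
qed

lemma Vm_norm2: "(norm (Vm \<omega> :: 'a::euclidean_space))\<^sup>2 = (\<Sum>b\<in>Basis. (\<omega> b)\<^sup>2)"
proof -
  have "(norm (Vm \<omega> :: 'a))\<^sup>2 = Vm \<omega> \<bullet> Vm \<omega>" by (simp add: power2_norm_eq_inner)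
  also have "\<dots> = (\<Sum>b\<in>Basis. (Vm \<omega> \<bullet> b) * (Vm \<omega> \<bullet> b))" by (rule euclidean_inner)
  also have "\<dots> = (\<Sum>b\<in>Basis. (\<omega> b)\<^sup>2)" by (simp add: Vm_inner power2_eq_square)
  finally show ?thesis .
qed

lemma Vm_inner_w: "w \<bullet> Vm \<omega> = (\<Sum>b\<in>Basis. (w \<bullet> b) * \<omega> (b::'a::euclidean_space))"
  unfolding Vm_def by (simp add: inner_sum_right mult.commute)

lemma gauss_density_prod:
  fixes v :: "real^'n"
  shows "(real CARD('n) / (2 * pi)) powr (real CARD('n) / 2) *
       exp (- real CARD('n) * (norm v)\<^sup>2 / 2) =
    (\<Prod>b\<in>Basis. normal_density 0 (gsig CARD('n)) (v \<bullet> b))"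
proof -
  define d where "d = real CARD('n)"
  have dpos: "d > 0" unfolding d_def by simp
  have nv: "(norm v)\<^sup>2 = (\<Sum>b\<in>Basis. (v \<bullet> b)\<^sup>2)"
  proof -
    have "(norm v)\<^sup>2 = v \<bullet> v" by (simp add: power2_norm_eq_inner)
    also have "\<dots> = (\<Sum>b\<in>Basis. (v \<bullet> b) * (v \<bullet> b))" by (rule euclidean_inner)
    finally show ?thesis by (simp add: power2_eq_square)
  qed
  have nd: "normal_density 0 (gsig CARD('n)) y = sqrt (d / (2*pi)) * exp (- d * y\<^sup>2 / 2)" for y
    using dpos unfolding normal_density_def gsig_def d_def[symmetric] max_def
    by (simp add: power_divide real_sqrt_divide real_sqrt_mult field_simps d_def)
  have "(\<Prod>b\<in>(Basis::(real^'n) set). normal_density 0 (gsig CARD('n)) (v \<bullet> b))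
      = (\<Prod>b\<in>(Basis::(real^'n) set). sqrt (d / (2*pi))) * (\<Prod>b\<in>(Basis::(real^'n) set). exp (- d * (v \<bullet> b)\<^sup>2 / 2))"
    by (simp add: nd prod.distrib)
  also have "(\<Prod>b\<in>(Basis::(real^'n) set). sqrt (d / (2*pi))) = sqrt (d / (2*pi)) ^ CARD('n)"
    by simp
  also have "\<dots> = (d / (2 * pi)) powr (d / 2)"
    using dpos by (simp add: d_def powr_half_sqrt[symmetric] powr_realpow[symmetric] powr_powr)
  also have "(\<Prod>b\<in>(Basis::(real^'n) set). exp (- d * (v \<bullet> b)\<^sup>2 / 2)) = exp (- d * (norm v)\<^sup>2 / 2)"
    by (simp add: exp_sum[symmetric] nv sum_divide_distrib sum_distrib_left)
  finally show ?thesis by (simp add: d_def)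
qed

lemma density_PiM_N1:
  "density (PiM (Basis::(real^'n) set) (\<lambda>_. lborel))
      (\<lambda>\<omega>. ennreal (\<Prod>b\<in>Basis. normal_density 0 (gsig CARD('n)) (\<omega> b)))
   = PiM (Basis::(real^'n) set) (\<lambda>_. N1 CARD('n))"
proof (rule product_sigma_finite.PiM_eqI)
  show "product_sigma_finite (\<lambda>_. N1 CARD('n))"
    using N1P[of "CARD('n)"] unfolding product_prob_space_def by blast
  show "finite (Basis::(real^'n) set)" by simp
  show "sets (density (PiM (Basis::(real^'n) set) (\<lambda>_. lborel))
      (\<lambda>\<omega>. ennreal (\<Prod>b\<in>Basis. normal_density 0 (gsig CARD('n)) (\<omega> b))))
     = sets (PiM (Basis::(real^'n) set) (\<lambda>_. N1 CARD('n)))"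
    by (simp add: sets_PiM_cong[OF refl, of _ "\<lambda>_. N1 CARD('n)" "\<lambda>_. lborel"])
  fix A assume A: "\<And>i. i \<in> (Basis::(real^'n) set) \<Longrightarrow> A i \<in> sets (N1 CARD('n))"
  have "emeasure (density (PiM (Basis::(real^'n) set) (\<lambda>_. lborel))
      (\<lambda>\<omega>. ennreal (\<Prod>b\<in>Basis. normal_density 0 (gsig CARD('n)) (\<omega> b)))) (Pi\<^sub>E Basis A)
    = (\<integral>\<^sup>+\<omega>. ennreal (\<Prod>b\<in>Basis. normal_density 0 (gsig CARD('n)) (\<omega> b)) * indicator (Pi\<^sub>E Basis A) \<omega>
        \<partial>PiM (Basis::(real^'n) set) (\<lambda>_. lborel))"
    using A by (subst emeasure_density) (auto intro!: sets_PiM_I_finite)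
  also have "\<dots> = (\<integral>\<^sup>+\<omega>. (\<Prod>b\<in>Basis. ennreal (normal_density 0 (gsig CARD('n)) (\<omega> b)) * indicator (A b) (\<omega> b))
        \<partial>PiM (Basis::(real^'n) set) (\<lambda>_. lborel))"
    by (intro nn_integral_cong)
       (simp add: prod_ennreal[symmetric] prod.distrib indicator_def PiE_iff space_PiM prod.neutral split: if_split)
  also have "\<dots> = (\<Prod>b\<in>Basis. (\<integral>\<^sup>+y. ennreal (normal_density 0 (gsig CARD('n)) y) * indicator (A b) y \<partial>lborel))"
    using A by (subst product_sigma_finite.product_nn_integral_prod) (auto simp: product_sigma_finite_def lborel.sigma_finite_measure_axioms)
  also have "\<dots> = (\<Prod>b\<in>Basis. emeasure (N1 CARD('n)) (A b))"
    using A by (intro prod.cong refl) (simp add: N1_def emeasure_density)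
  finally show "emeasure (density (PiM (Basis::(real^'n) set) (\<lambda>_. lborel))
      (\<lambda>\<omega>. ennreal (\<Prod>b\<in>Basis. normal_density 0 (gsig CARD('n)) (\<omega> b)))) (Pi\<^sub>E Basis A)
      = (\<Prod>b\<in>Basis. emeasure (N1 CARD('n)) (A b))" .
qed

definition PN :: "'n itself \<Rightarrow> ((real^'n) \<Rightarrow> real) measure" where
  "PN _ = PiM (Basis::(real^'n) set) (\<lambda>_. N1 CARD('n))"

lemma gauss_eq: "(gauss_tmpl :: (real^'n) measure) = distr (PN TYPE('n::finite)) borel Vm"
proof -
  have "(gauss_tmpl :: (real^'n) measure) = density (distr (PiM (Basis::(real^'n) set) (\<lambda>_. lborel)) borel Vm)
     (\<lambda>v. ennreal ((real CARD('n) / (2 * pi)) powr (real CARD('n) / 2) *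
       exp (- real CARD('n) * (norm v)\<^sup>2 / 2)))"
    unfolding gauss_tmpl_def Vm_def by (simp add: lborel_eq[symmetric])
  also have "\<dots> = distr (density (PiM (Basis::(real^'n) set) (\<lambda>_. lborel))
     (\<lambda>\<omega>. ennreal ((real CARD('n) / (2 * pi)) powr (real CARD('n) / 2) *
       exp (- real CARD('n) * (norm (Vm \<omega> :: real^'n))\<^sup>2 / 2)))) borel Vm"
    by (rule density_distr) auto
  also have "(\<lambda>\<omega>. ennreal ((real CARD('n) / (2 * pi)) powr (real CARD('n) / 2) *
       exp (- real CARD('n) * (norm (Vm \<omega> :: real^'n))\<^sup>2 / 2)))
     = (\<lambda>\<omega>. ennreal (\<Prod>b\<in>(Basis::(real^'n) set). normal_density 0 (gsig CARD('n)) (\<omega> b)))"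
    by (rule ext, subst gauss_density_prod, simp add: Vm_inner cong: prod.cong)
  finally show ?thesis by (simp add: density_PiM_N1 PN_def)
qed

lemma prob_space_PN: "prob_space (PN TYPE('n::finite))"
  unfolding PN_def by (intro prob_space_PiM prob_space_N1)

lemma prob_space_gauss: "prob_space (gauss_tmpl :: (real^'n) measure)"
  unfolding gauss_eq by (intro prob_space.prob_space_distr prob_space_PN) (unfold PN_def, rule Vm_measurable, simp)

lemma sets_gauss[simp, measurable_cong]: "sets (gauss_tmpl :: (real^'n) measure) = sets borel"
  by (simp add: gauss_tmpl_def)

lemma space_gauss[simp]: "space (gauss_tmpl :: (real^'n) measure) = UNIV"
  by (simp add: gauss_tmpl_def)

lemma sets_PN[measurable_cong]: "sets (PN TYPE('n::finite)) = sets (PiM (Basis::(real^'n) set) (\<lambda>_. borel))"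
  unfolding PN_def by (intro sets_PiM_cong) simp_all

lemma space_PN: "space (PN TYPE('n::finite)) = (Basis::(real^'n) set) \<rightarrow>\<^sub>E UNIV"
  by (simp add: PN_def space_PiM)

lemma coord_distributed:
  assumes b: "b \<in> (Basis::(real^'n::finite) set)"
  shows "distributed (PN TYPE('n)) lborel (\<lambda>\<omega>. \<omega> b) (normal_density 0 (gsig CARD('n)))"
proof -
  have "distr (PN TYPE('n)) lborel (\<lambda>\<omega>. \<omega> b) = distr (PN TYPE('n)) (N1 CARD('n)) (\<lambda>\<omega>. \<omega> b)"
    by (rule distr_cong) auto
  also have "\<dots> = N1 CARD('n)"
    unfolding PN_def by (rule distr_PiM_component[OF prob_space_N1 b])
  finally show ?thesis
    unfolding distributed_def N1_def using b
    by (auto simp: PN_def)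
qed

lemma indep_coords:
  "prob_space.indep_vars (PN TYPE('n::finite)) (\<lambda>_. borel) (\<lambda>b \<omega>. \<omega> b) (Basis::(real^'n) set)"
proof -
  interpret P: prob_space "PN TYPE('n)" by (rule prob_space_PN)
  have rv: "(\<lambda>\<omega>. \<omega> b) \<in> measurable (PN TYPE('n)) borel" if "b \<in> (Basis::(real^'n) set)" for b
  proof -
    have "(\<lambda>\<omega>. \<omega> b) \<in> measurable (PN TYPE('n)) (N1 CARD('n))"
      unfolding PN_def by (rule measurable_component_singleton[OF that])
    then show ?thesis using measurable_cong_sets[OF refl sets_N1, of "PN TYPE('n)"] by simp
  qed
  show ?thesis
  proof (subst P.indep_vars_iff_distr_eq_PiM')
    show "(Basis::(real^'n) set) \<noteq> {}" by simp
    show "\<And>i. i \<in> (Basis::(real^'n) set) \<Longrightarrow> (\<lambda>\<omega>. \<omega> i) \<in> measurable (PN TYPE('n)) borel" by (rule rv)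
    have "distr (PN TYPE('n)) (Pi\<^sub>M Basis (\<lambda>i. borel)) (\<lambda>x. \<lambda>i\<in>(Basis::(real^'n) set). x i)
        = distr (PN TYPE('n)) (PN TYPE('n)) (\<lambda>x. x)"
      by (rule distr_cong) (auto simp: sets_PN space_PN)
    also have "\<dots> = PN TYPE('n)" by simp
    also have "\<dots> = (Pi\<^sub>M Basis (\<lambda>i. distr (PN TYPE('n)) borel (\<lambda>\<omega>. \<omega> i)))"
    proof -
      have "\<And>i. i \<in> (Basis::(real^'n) set) \<Longrightarrow> distr (PN TYPE('n)) borel (\<lambda>\<omega>. \<omega> i) = N1 CARD('n)"
      proof -
        fix i assume i: "i \<in> (Basis::(real^'n) set)"
        have "distr (PN TYPE('n)) borel (\<lambda>\<omega>. \<omega> i) = distr (PN TYPE('n)) (N1 CARD('n)) (\<lambda>\<omega>. \<omega> i)"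
          by (rule distr_cong) auto
        also have "\<dots> = N1 CARD('n)"
          unfolding PN_def by (rule distr_PiM_component[OF prob_space_N1 i])
        finally show "distr (PN TYPE('n)) borel (\<lambda>\<omega>. \<omega> i) = N1 CARD('n)" .
      qed
      then show ?thesis unfolding PN_def by (intro PiM_cong) auto
    qed
    finally show "distr (PN TYPE('n)) (Pi\<^sub>M Basis (\<lambda>i. borel)) (\<lambda>x. \<lambda>i\<in>(Basis::(real^'n) set). x i)
        = (Pi\<^sub>M Basis (\<lambda>i. distr (PN TYPE('n)) borel (\<lambda>\<omega>. \<omega> i)))" .
  qed
qed

lemma inner_distributed:
  fixes w :: "real^'n::finite"
  assumes w: "w \<noteq> 0"
  shows "distributed (PN TYPE('n)) lborel (\<lambda>\<omega>. w \<bullet> Vm \<omega>) (normal_density 0 (norm w * gsig CARD('n)))"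
proof -
  interpret P: prob_space "PN TYPE('n)" by (rule prob_space_PN)
  define I where "I = {b\<in>(Basis::(real^'n) set). w \<bullet> b \<noteq> 0}"
  have I: "finite I" "I \<subseteq> Basis" unfolding I_def by auto
  have Ine: "I \<noteq> {}"
  proof
    assume "I = {}"
    then have "\<forall>b\<in>(Basis::(real^'n) set). w \<bullet> b = 0" unfolding I_def by auto
    then have "w = 0" by (metis euclidean_eqI inner_zero_left)
    with w show False by simp
  qed
  have ind: "P.indep_vars (\<lambda>_. borel) (\<lambda>b \<omega>. (w \<bullet> b) * \<omega> b) I"
    using P.indep_vars_compose2[OF indep_coords, of "\<lambda>b y. (w \<bullet> b) * y" "\<lambda>_. borel"]
    by (rule P.indep_vars_subset[OF _ I(2)]) auto
  have nd: "distributed (PN TYPE('n)) lborel (\<lambda>\<omega>. (w \<bullet> b) * \<omega> b) (normal_density 0 (\<bar>w \<bullet> b\<bar> * gsig CARD('n)))"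
    if "b \<in> I" for b
    using P.normal_density_affine[OF coord_distributed gsig_pos, of b "w \<bullet> b" 0] that I
    unfolding I_def by auto
  have "distributed (PN TYPE('n)) lborel (\<lambda>x. \<Sum>i\<in>I. (w \<bullet> i) * x i)
      (normal_density (\<Sum>i\<in>I. 0) (sqrt (\<Sum>i\<in>I. (\<bar>w \<bullet> i\<bar> * gsig CARD('n))\<^sup>2)))"
    by (rule P.sum_indep_normal[OF I(1) Ine ind _ nd])
       (use gsig_pos in \<open>auto simp: I_def\<close>)
  moreover have "(\<lambda>x. \<Sum>i\<in>I. (w \<bullet> i) * x i) = (\<lambda>\<omega>. w \<bullet> Vm \<omega>)"
    unfolding Vm_inner_w by (rule ext, rule sum.mono_neutral_left) (auto simp: I_def)
  moreover have "sqrt (\<Sum>i\<in>I. (\<bar>w \<bullet> i\<bar> * gsig CARD('n))\<^sup>2) = norm w * gsig CARD('n)"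
  proof -
    have "(\<Sum>i\<in>I. (\<bar>w \<bullet> i\<bar> * gsig CARD('n))\<^sup>2) = (\<Sum>i\<in>Basis. (w \<bullet> i)\<^sup>2) * (gsig CARD('n))\<^sup>2"
    proof -
      have "(\<Sum>i\<in>I. (w \<bullet> i)\<^sup>2) = (\<Sum>i\<in>Basis. (w \<bullet> i)\<^sup>2)"
        by (rule sum.mono_neutral_left) (auto simp: I_def)
      then show ?thesis by (simp add: power_mult_distrib sum_distrib_right[symmetric])
    qed
    also have "(\<Sum>i\<in>Basis. (w \<bullet> i)\<^sup>2) = (norm w)\<^sup>2"
      by (rule norm2_basis[symmetric])
    finally show ?thesis using gsig_pos[of "CARD('n)"] by (simp add: real_sqrt_mult abs_of_pos)
  qed
  ultimately show ?thesis by simp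
qed

lemma Vm_meas_PN[measurable]: "Vm \<in> measurable (PN TYPE('n::finite)) (borel :: (real^'n) measure)"
  unfolding PN_def by (rule Vm_measurable) simp

lemma gauss_inner_integral:
  fixes w :: "real^'n::finite" and h :: "real \<Rightarrow> real"
  assumes w: "w \<noteq> 0" and h[measurable]: "h \<in> borel_measurable borel"
  shows "(\<integral>\<nu>. h (w \<bullet> \<nu>) \<partial>gauss_tmpl) = (\<integral>y. normal_density 0 (norm w * gsig CARD('n)) y * h y \<partial>lborel)"
    and "integrable gauss_tmpl (\<lambda>\<nu>. h (w \<bullet> \<nu>)) \<longleftrightarrow> integrable lborel (\<lambda>y. normal_density 0 (norm w * gsig CARD('n)) y * h y)"
proof -
  have D: "distributed (PN TYPE('n)) lborel (\<lambda>\<omega>. w \<bullet> Vm \<omega>) (normal_density 0 (norm w * gsig CARD('n)))"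
    by (rule inner_distributed[OF w])
  have "(\<integral>\<nu>. h (w \<bullet> \<nu>) \<partial>gauss_tmpl) = (\<integral>\<omega>. h (w \<bullet> Vm \<omega>) \<partial>PN TYPE('n))"
    unfolding gauss_eq by (rule integral_distr) auto
  also have "\<dots> = (\<integral>y. normal_density 0 (norm w * gsig CARD('n)) y * h y \<partial>lborel)"
    by (rule distributed_integral[OF D, symmetric]) auto
  finally show "(\<integral>\<nu>. h (w \<bullet> \<nu>) \<partial>gauss_tmpl) = (\<integral>y. normal_density 0 (norm w * gsig CARD('n)) y * h y \<partial>lborel)" .
  have "integrable gauss_tmpl (\<lambda>\<nu>. h (w \<bullet> \<nu>)) \<longleftrightarrow> integrable (PN TYPE('n)) (\<lambda>\<omega>. h (w \<bullet> Vm \<omega>))"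
    unfolding gauss_eq by (rule integrable_distr_eq) auto
  also have "\<dots> \<longleftrightarrow> integrable lborel (\<lambda>y. normal_density 0 (norm w * gsig CARD('n)) y * h y)"
    by (rule distributed_integrable[OF D, symmetric]) auto
  finally show "integrable gauss_tmpl (\<lambda>\<nu>. h (w \<bullet> \<nu>)) \<longleftrightarrow> integrable lborel (\<lambda>y. normal_density 0 (norm w * gsig CARD('n)) y * h y)" .
qed

lemma gauss_abs_inner:
  fixes w :: "real^'n::finite"
  shows "(\<integral>\<nu>. \<bar>w \<bullet> \<nu>\<bar> \<partial>gauss_tmpl) = norm w * gsig CARD('n) * sqrt (2 / pi)"
    and "integrable gauss_tmpl (\<lambda>\<nu>. \<bar>w \<bullet> \<nu>\<bar>)"
proof -
  have "(\<integral>\<nu>. \<bar>w \<bullet> \<nu>\<bar> \<partial>gauss_tmpl) = norm w * gsig CARD('n) * sqrt (2 / pi) \<and> integrable gauss_tmpl (\<lambda>\<nu>. \<bar>w \<bullet> \<nu>\<bar>)"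
  proof (cases "w = 0")
    case True
    then show ?thesis by simp
  next
    case False
    have i1: "(\<integral>y. normal_density 0 (norm w * gsig CARD('n)) y * \<bar>y\<bar> \<partial>lborel) = norm w * gsig CARD('n) * sqrt (2 / pi)"
      using integral_normal_moment_abs_odd[where \<mu>=0 and \<sigma>="norm w * gsig CARD('n)" and k=0] False gsig_pos[of "CARD('n)"] by simp
    have i2: "integrable lborel (\<lambda>y. normal_density 0 (norm w * gsig CARD('n)) y * \<bar>y\<bar>)"
      using integrable_normal_moment_abs[where \<mu>=0 and \<sigma>="norm w * gsig CARD('n)" and k=1] False gsig_pos[of "CARD('n)"] by simp
    show ?thesis
      using gauss_inner_integral[OF False, of abs] i1 i2 by simp
  qed
  then show "(\<integral>\<nu>. \<bar>w \<bullet> \<nu>\<bar> \<partial>gauss_tmpl) = norm w * gsig CARD('n) * sqrt (2 / pi)"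
    and "integrable gauss_tmpl (\<lambda>\<nu>. \<bar>w \<bullet> \<nu>\<bar>)" by auto
qed

lemma normal_exp_sq:
  fixes d s y :: real
  assumes d: "d > 0" and s: "s > 0"
  shows "normal_density 0 (1 / sqrt d) y * exp (d * (s - 1) / (2 * s) * y\<^sup>2)
       = sqrt s * normal_density 0 (sqrt s * (1 / sqrt d)) y"
proof -
  have e: "exp (-(y - 0)\<^sup>2 / (2 * (1 / sqrt d)\<^sup>2)) * exp (d * (s - 1) / (2 * s) * y\<^sup>2)
      = exp (-(y - 0)\<^sup>2 / (2 * (sqrt s * (1 / sqrt d))\<^sup>2))"
    unfolding exp_add[symmetric] using d s
    by (intro arg_cong[where f=exp]) (simp add: power_mult_distrib power_divide field_simps)
  have c: "1 / sqrt (2 * (pi * (1 / sqrt d)\<^sup>2)) = sqrt s * (1 / sqrt (2 * (pi * (sqrt s * (1 / sqrt d))\<^sup>2)))"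
    using d s by (simp add: power_mult_distrib power_divide real_sqrt_mult real_sqrt_divide field_simps)
  show ?thesis
    unfolding normal_density_def by (simp only: mult.assoc e, simp only: c mult.assoc)
qed

lemma gsig_eq: "gsig CARD('n::finite) = 1 / sqrt (real CARD('n))"
  by (simp add: gsig_def)

lemma gauss_chernoff:
  assumes s: "s > 1"
  shows "measure (gauss_tmpl :: (real^'n::finite) measure) {\<nu>. s \<le> (norm \<nu>)\<^sup>2}
      \<le> s powr (real CARD('n) / 2) * exp (- real CARD('n) * (s - 1) / 2)"
proof -
  define d where "d = real CARD('n)"
  have d: "d > 0" unfolding d_def by simp
  define l where "l = d * (s - 1) / (2 * s)"
  have l: "l \<ge> 0" using d s unfolding l_def by simp
  have ls: "l * s = d * (s - 1) / 2" unfolding l_def using s by (simp add: field_simps)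
  have A[measurable]: "{\<nu>::real^'n. s \<le> (norm \<nu>)\<^sup>2} \<in> sets borel" by measurable
  have "emeasure (gauss_tmpl :: (real^'n) measure) {\<nu>. s \<le> (norm \<nu>)\<^sup>2}
      = emeasure (PN TYPE('n)) (Vm -` {\<nu>::real^'n. s \<le> (norm \<nu>)\<^sup>2} \<inter> space (PN TYPE('n)))"
    unfolding gauss_eq by (rule emeasure_distr) auto
  also have "\<dots> = (\<integral>\<^sup>+\<omega>. indicator (Vm -` {\<nu>::real^'n. s \<le> (norm \<nu>)\<^sup>2} \<inter> space (PN TYPE('n))) \<omega> \<partial>PN TYPE('n))"
    by (rule nn_integral_indicator[symmetric]) measurable
  also have "\<dots> = (\<integral>\<^sup>+\<omega>. indicator {\<omega>. s \<le> (norm (Vm \<omega> :: real^'n))\<^sup>2} \<omega> \<partial>PN TYPE('n))"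
    by (rule nn_integral_cong) (auto simp: indicator_def)
  also have "\<dots> \<le> (\<integral>\<^sup>+\<omega>. ennreal (exp (- (l * s))) * (\<Prod>b\<in>(Basis::(real^'n) set). ennreal (exp (l * (\<omega> b)\<^sup>2))) \<partial>PN TYPE('n))"
  proof (intro nn_integral_mono)
    fix \<omega> :: "real^'n \<Rightarrow> real"
    have eq: "ennreal (exp (- (l * s))) * (\<Prod>b\<in>(Basis::(real^'n) set). ennreal (exp (l * (\<omega> b)\<^sup>2)))
        = ennreal (exp (l * ((norm (Vm \<omega> :: real^'n))\<^sup>2 - s)))"
      by (simp add: prod_ennreal ennreal_mult'[symmetric] exp_sum[symmetric] exp_add[symmetric]
           Vm_norm2 sum_distrib_left algebra_simps)
    show "indicator {\<omega>. s \<le> (norm (Vm \<omega> :: real^'n))\<^sup>2} \<omega>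
        \<le> ennreal (exp (- (l * s))) * (\<Prod>b\<in>(Basis::(real^'n) set). ennreal (exp (l * (\<omega> b)\<^sup>2)))"
      unfolding eq using l by (auto simp: indicator_def mult_nonneg_nonneg)
  qed
  also have "\<dots> = ennreal (exp (- (l * s))) * (\<integral>\<^sup>+\<omega>. (\<Prod>b\<in>(Basis::(real^'n) set). ennreal (exp (l * (\<omega> b)\<^sup>2))) \<partial>PN TYPE('n))"
    by (rule nn_integral_cmult) (simp add: PN_def)
  also have "(\<integral>\<^sup>+\<omega>. (\<Prod>b\<in>(Basis::(real^'n) set). ennreal (exp (l * (\<omega> b)\<^sup>2))) \<partial>PN TYPE('n))
      = (\<Prod>b\<in>(Basis::(real^'n) set). (\<integral>\<^sup>+y. ennreal (exp (l * y\<^sup>2)) \<partial>N1 CARD('n)))"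
    unfolding PN_def
    by (rule product_sigma_finite.product_nn_integral_prod)
       (use N1P[of "CARD('n)"] in \<open>auto simp: product_prob_space_def\<close>)
  also have "(\<integral>\<^sup>+y. ennreal (exp (l * y\<^sup>2)) \<partial>N1 CARD('n)) = ennreal (sqrt s)"
  proof -
    have "(\<integral>\<^sup>+y. ennreal (exp (l * y\<^sup>2)) \<partial>N1 CARD('n))
        = (\<integral>\<^sup>+y. ennreal (normal_density 0 (1 / sqrt d) y) * ennreal (exp (l * y\<^sup>2)) \<partial>lborel)"
      unfolding N1_def gsig_eq d_def by (subst nn_integral_density) auto
    also have "\<dots> = (\<integral>\<^sup>+y. ennreal (sqrt s * normal_density 0 (sqrt s * (1 / sqrt d)) y) \<partial>lborel)"
      using normal_exp_sq[OF d, of s] s unfolding l_def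
      by (intro nn_integral_cong) (simp add: ennreal_mult'[symmetric])
    also have "\<dots> = ennreal (sqrt s) * (\<integral>\<^sup>+y. ennreal (normal_density 0 (sqrt s * (1 / sqrt d)) y) \<partial>lborel)"
      using s by (subst nn_integral_cmult[symmetric]) (auto simp: ennreal_mult)
    also have "(\<integral>\<^sup>+y. ennreal (normal_density 0 (sqrt s * (1 / sqrt d)) y) \<partial>lborel) = 1"
    proof -
      have p: "sqrt s * (1 / sqrt d) > 0" using s d by simp
      show ?thesis
        using integrable_normal_density[OF p] integral_normal_density[OF p]
        by (subst nn_integral_eq_integral) auto
    qed
    finally show ?thesis by simp
  qed
  also have "(\<Prod>b\<in>(Basis::(real^'n) set). ennreal (sqrt s)) = ennreal (s powr (d / 2))"
  proof -
    have "(\<Prod>b\<in>(Basis::(real^'n) set). ennreal (sqrt s)) = ennreal (sqrt s ^ CARD('n))"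
      using s by (simp add: ennreal_power)
    also have "sqrt s ^ CARD('n) = (s powr (1/2)) powr (real CARD('n))"
      using s by (simp add: powr_half_sqrt powr_realpow)
    also have "\<dots> = s powr (d / 2)" by (simp add: powr_powr d_def)
    finally show ?thesis .
  qed
  also have "ennreal (exp (- (l * s))) * ennreal (s powr (d / 2)) = ennreal (s powr (d / 2) * exp (- d * (s - 1) / 2))"
    by (simp add: ls ennreal_mult'[symmetric] mult.commute)
  finally have "emeasure (gauss_tmpl :: (real^'n) measure) {\<nu>. s \<le> (norm \<nu>)\<^sup>2}
      \<le> ennreal (s powr (d / 2) * exp (- d * (s - 1) / 2))" .
  then show ?thesis
    unfolding d_def
    using prob_space_gauss
    by (subst (asm) finite_measure.emeasure_eq_measure) (auto simp: ennreal_le_iff prob_space_def)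
qed

lemma normal_exp_lin:
  fixes t l y :: real
  assumes t: "t > 0"
  shows "normal_density 0 t y * exp (l * y) = exp (l\<^sup>2 * t\<^sup>2 / 2) * normal_density (l * t\<^sup>2) t y"
proof -
  have e: "exp (-(y - 0)\<^sup>2 / (2 * t\<^sup>2)) * exp (l * y) = exp (l\<^sup>2 * t\<^sup>2 / 2) * exp (-(y - l * t\<^sup>2)\<^sup>2 / (2 * t\<^sup>2))"
    unfolding exp_add[symmetric] using t
    by (intro arg_cong[where f=exp]) (simp add: power2_eq_square field_simps)
  show ?thesis
    unfolding normal_density_def by (simp only: mult.assoc e mult.left_commute[of "exp (l\<^sup>2 * t\<^sup>2 / 2)"])
qed

lemma max0_le_exp:
  fixes u l :: real
  assumes l: "l > 0"
  shows "max 0 u \<le> exp (l * u) / (exp 1 * l)"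
proof -
  have "l * u \<le> exp (l * u - 1)" using exp_ge_add_one_self[of "l * u - 1"] by simp
  then have "l * u \<le> exp (l * u) / exp 1" by (simp add: exp_diff)
  then have "u \<le> exp (l * u) / (exp 1 * l)" using l by (simp add: field_simps)
  moreover have "0 \<le> exp (l * u) / (exp 1 * l)" using l by simp
  ultimately show ?thesis by simp
qed

lemma normal_tail_bound:
  fixes t s l :: real
  assumes t: "t > 0" and l: "l > 0" and s0: "s \<ge> 0"
  shows "integrable lborel (\<lambda>y. normal_density 0 t y * max 0 (\<bar>y\<bar> - s))"
    and "(\<integral>y. normal_density 0 t y * max 0 (\<bar>y\<bar> - s) \<partial>lborel)
        \<le> 2 * exp (l\<^sup>2 * t\<^sup>2 / 2 - l * s) / (exp 1 * l)"
proof -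
  have iabs: "integrable lborel (\<lambda>y. normal_density 0 t y * \<bar>y\<bar>)"
    using integrable_normal_moment_abs[where \<mu>=0 and \<sigma>=t and k=1] t by simp
  have bd: "norm (normal_density 0 t y * max 0 (\<bar>y\<bar> - s)) \<le> norm (normal_density 0 t y * \<bar>y\<bar>)" for y
    using s0 by (auto simp: abs_mult intro!: mult_left_mono)
  show int1: "integrable lborel (\<lambda>y. normal_density 0 t y * max 0 (\<bar>y\<bar> - s))"
    by (rule Bochner_Integration.integrable_bound[OF iabs]) (use bd in auto)
  define C where "C = exp (- (l * s)) / (exp 1 * l)"
  have C: "C \<ge> 0" unfolding C_def using l by simp
  have pw: "normal_density 0 t y * max 0 (\<bar>y\<bar> - s)
      \<le> C * (normal_density 0 t y * exp (l * y)) + C * (normal_density 0 t y * exp ((-l) * y))" for y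
  proof -
    have "max 0 (\<bar>y\<bar> - s) \<le> exp (l * (\<bar>y\<bar> - s)) / (exp 1 * l)" by (rule max0_le_exp[OF l])
    also have "exp (l * (\<bar>y\<bar> - s)) = exp (l * \<bar>y\<bar>) * exp (- (l * s))"
      by (simp add: exp_add[symmetric] algebra_simps)
    also have "exp (l * \<bar>y\<bar>) \<le> exp (l * y) + exp ((-l) * y)"
      by (cases "y \<ge> 0") (auto simp: add_increasing add_increasing2)
    finally have "max 0 (\<bar>y\<bar> - s) \<le> (exp (l * y) + exp ((-l) * y)) * exp (- (l * s)) / (exp 1 * l)"
      using l by (simp add: divide_right_mono mult_right_mono)
    moreover have eq: "(exp (l * y) + exp ((-l) * y)) * exp (- (l * s)) / (exp 1 * l) = C * exp (l * y) + C * exp ((-l) * y)"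
      unfolding C_def by (simp add: add_divide_distrib distrib_left distrib_right mult.commute)
    ultimately have "max 0 (\<bar>y\<bar> - s) \<le> C * exp (l * y) + C * exp ((-l) * y)"
      by linarith
    then have "normal_density 0 t y * max 0 (\<bar>y\<bar> - s) \<le> normal_density 0 t y * (C * exp (l * y) + C * exp ((-l) * y))"
      by (rule mult_left_mono) simp
    also have "\<dots> = C * (normal_density 0 t y * exp (l * y)) + C * (normal_density 0 t y * exp ((-l) * y))"
      by (simp only: distrib_left mult.left_commute)
    finally show ?thesis .
  qed
  have tt: "t\<^sup>2 > 0" using t by simp
  have ip: "integrable lborel (\<lambda>y. normal_density 0 t y * exp (l * y))"
    unfolding normal_exp_lin[OF t] using integrable_normal_density[OF t] by simp
  have im: "integrable lborel (\<lambda>y. normal_density 0 t y * exp ((-l) * y))"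
    unfolding normal_exp_lin[OF t] using integrable_normal_density[OF t] by simp
  have vp: "(\<integral>y. normal_density 0 t y * exp (l * y) \<partial>lborel) = exp (l\<^sup>2 * t\<^sup>2 / 2)"
    unfolding normal_exp_lin[OF t] using integral_normal_density[OF t] by simp
  have vm: "(\<integral>y. normal_density 0 t y * exp ((-l) * y) \<partial>lborel) = exp (l\<^sup>2 * t\<^sup>2 / 2)"
    unfolding normal_exp_lin[OF t] using integral_normal_density[OF t] by simp
  have "(\<integral>y. normal_density 0 t y * max 0 (\<bar>y\<bar> - s) \<partial>lborel)
      \<le> (\<integral>y. C * (normal_density 0 t y * exp (l * y)) + C * (normal_density 0 t y * exp ((-l) * y)) \<partial>lborel)"
    by (rule integral_mono[OF int1]) (use ip im pw in auto)
  also have "\<dots> = C * exp (l\<^sup>2 * t\<^sup>2 / 2) + C * exp (l\<^sup>2 * t\<^sup>2 / 2)"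
    using ip im vp vm by simp
  also have "\<dots> = 2 * exp (l\<^sup>2 * t\<^sup>2 / 2 - l * s) / (exp 1 * l)"
  proof -
    have ee: "exp (l\<^sup>2 * t\<^sup>2 / 2 - l * s) = exp (l\<^sup>2 * t\<^sup>2 / 2) * exp (- (l * s))"
      by (simp add: exp_add[symmetric])
    have gen: "\<And>x k E::real. x / k * E + x / k * E = 2 * (E * x) / k" by (simp add: field_simps)
    show ?thesis unfolding C_def ee by (rule gen)
  qed
  finally show "(\<integral>y. normal_density 0 t y * max 0 (\<bar>y\<bar> - s) \<partial>lborel)
        \<le> 2 * exp (l\<^sup>2 * t\<^sup>2 / 2 - l * s) / (exp 1 * l)" .
qed

lemma gauss_tail:
  fixes v :: "real^'n::finite"
  assumes v: "norm v \<le> 1" and s: "s > 0"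
  shows "integrable gauss_tmpl (\<lambda>\<nu>. max 0 (\<bar>v \<bullet> \<nu>\<bar> - s))"
    and "(\<integral>\<nu>. max 0 (\<bar>v \<bullet> \<nu>\<bar> - s) \<partial>gauss_tmpl)
       \<le> 2 * exp (- s\<^sup>2 * real CARD('n) / 2) / (exp 1 * s * real CARD('n))"
proof -
  define d where "d = real CARD('n)"
  have d: "d > 0" unfolding d_def by simp
  have B: "0 \<le> 2 * exp (- s\<^sup>2 * d / 2) / (exp 1 * s * d)" using s d by simp
  have "integrable gauss_tmpl (\<lambda>\<nu>. max 0 (\<bar>v \<bullet> \<nu>\<bar> - s)) \<and>
        (\<integral>\<nu>. max 0 (\<bar>v \<bullet> \<nu>\<bar> - s) \<partial>gauss_tmpl) \<le> 2 * exp (- s\<^sup>2 * d / 2) / (exp 1 * s * d)"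
  proof (cases "v = 0")
    case True
    then show ?thesis using s B by simp
  next
    case False
    define t where "t = norm v * gsig CARD('n)"
    have t: "t > 0" unfolding t_def using False gsig_pos[of "CARD('n)"] by simp
    have tle: "t\<^sup>2 \<le> 1 / d"
    proof -
      have "t\<^sup>2 = (norm v)\<^sup>2 * (1 / d)" unfolding t_def gsig_eq d_def
        using d by (simp add: power_mult_distrib power_divide d_def)
      also have "\<dots> \<le> 1 * (1 / d)"
        using v d by (intro mult_right_mono) (auto simp: power_le_one)
      finally show ?thesis by simp
    qed
    define l where "l = s * d"
    have l: "l > 0" unfolding l_def using s d by simp
    have h: "(\<lambda>y. max 0 (\<bar>y\<bar> - s)) \<in> borel_measurable borel" by measurable
    note GI = gauss_inner_integral[OF False h]
    have "integrable gauss_tmpl (\<lambda>\<nu>. max 0 (\<bar>v \<bullet> \<nu>\<bar> - s))"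
      using GI(2) normal_tail_bound(1)[OF t l, of s] s unfolding t_def by simp
    moreover have "(\<integral>\<nu>. max 0 (\<bar>v \<bullet> \<nu>\<bar> - s) \<partial>gauss_tmpl) \<le> 2 * exp (l\<^sup>2 * t\<^sup>2 / 2 - l * s) / (exp 1 * l)"
      using GI(1) normal_tail_bound(2)[OF t l, of s] s unfolding t_def by simp
    moreover have "2 * exp (l\<^sup>2 * t\<^sup>2 / 2 - l * s) / (exp 1 * l) \<le> 2 * exp (- s\<^sup>2 * d / 2) / (exp 1 * s * d)"
    proof -
      have "l\<^sup>2 * t\<^sup>2 / 2 - l * s \<le> l\<^sup>2 * (1/d) / 2 - l * s"
        using mult_left_mono[OF tle, of "l\<^sup>2"] by simp
      also have "\<dots> = - s\<^sup>2 * d / 2" unfolding l_def using d by (simp add: power2_eq_square field_simps)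
      finally have "exp (l\<^sup>2 * t\<^sup>2 / 2 - l * s) \<le> exp (- s\<^sup>2 * d / 2)" by simp
      then show ?thesis unfolding l_def using l s d
        by (simp add: divide_right_mono mult.assoc l_def)
    qed
    ultimately show ?thesis by linarith
  qed
  then show "integrable gauss_tmpl (\<lambda>\<nu>. max 0 (\<bar>v \<bullet> \<nu>\<bar> - s))"
    and "(\<integral>\<nu>. max 0 (\<bar>v \<bullet> \<nu>\<bar> - s) \<partial>gauss_tmpl)
       \<le> 2 * exp (- s\<^sup>2 * real CARD('n) / 2) / (exp 1 * s * real CARD('n))"
    unfolding d_def by auto
qed

lemma lborel_integral_reflect:
  fixes f :: "'a::euclidean_space \<Rightarrow> real"
  assumes [measurable]: "f \<in> borel_measurable borel"
  shows "(\<integral>x. f (- x) \<partial>lborel) = (\<integral>x. f x \<partial>lborel)"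
proof -
  have L: "lborel = density (distr lborel borel (\<lambda>x::'a. - x)) (\<lambda>_. 1)"
    using lborel_affine[of "-1" "0::'a"] by simp
  have "(\<integral>x. f x \<partial>lborel) = (\<integral>x. f x \<partial>density (distr lborel borel (\<lambda>x::'a. - x)) (\<lambda>_. 1))"
    using L by simp
  also have "\<dots> = (\<integral>x. f x \<partial>distr lborel borel (\<lambda>x::'a. - x))"
    by (simp add: density_1)
  also have "\<dots> = (\<integral>x. f (- x) \<partial>lborel)"
    by (rule integral_distr) auto
  finally show ?thesis by simp
qed

lemma gauss_integral_odd:
  fixes h :: "real^'n::finite \<Rightarrow> real"
  assumes [measurable]: "h \<in> borel_measurable borel" and odd: "\<And>v. h (- v) = - h v"
  shows "(\<integral>\<nu>. h \<nu> \<partial>gauss_tmpl) = 0"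
proof -
  define g :: "real^'n \<Rightarrow> real" where "g v = (real CARD('n) / (2 * pi)) powr (real CARD('n) / 2) *
       exp (- real CARD('n) * (norm v)\<^sup>2 / 2)" for v
  have g0: "g v \<ge> 0" for v unfolding g_def by simp
  have gm[measurable]: "g \<in> borel_measurable borel" unfolding g_def by measurable
  have ge: "g (- v) = g v" for v unfolding g_def by simp
  have I: "(\<integral>\<nu>. h \<nu> \<partial>gauss_tmpl) = (\<integral>x. g x * h x \<partial>lborel)"
    unfolding gauss_tmpl_def g_def[symmetric]
    by (subst integral_density) (auto simp: g0)
  also have "\<dots> = (\<integral>x. g (- x) * h (- x) \<partial>lborel)"
    by (rule lborel_integral_reflect[symmetric]) measurable
  also have "\<dots> = - (\<integral>x. g x * h x \<partial>lborel)"
    by (simp add: ge odd)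
  finally show ?thesis using I by simp
qed

lemma cont_mm: "continuous_on UNIV (\<lambda>p::((real^'n^'n) \<times> (real^'n^'n)). fst p ** snd p)"
  unfolding matrix_matrix_mult_def by (intro continuous_on_vec_lambda continuous_intros)

lemma cont_mv: "continuous_on UNIV (\<lambda>p::((real^'n^'n) \<times> (real^'n)). fst p *v snd p)"
  unfolding matrix_vector_mult_def by (intro continuous_on_vec_lambda continuous_intros)

lemma cont_tr: "continuous_on UNIV (\<lambda>p::(real^'n^'n). transpose p)"
  unfolding transpose_def by (intro continuous_on_vec_lambda continuous_intros)

definition bor :: "'a::topological_space measure \<Rightarrow> bool" where
  "bor M \<longleftrightarrow> (\<lambda>x. x) \<in> measurable M borel"

lemma bor_meas: "bor M \<Longrightarrow> f \<in> borel_measurable borel \<Longrightarrow> f \<in> borel_measurable M"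
  unfolding bor_def by (drule (1) measurable_comp) (simp add: comp_def)

lemma bor_meas_cont: "bor M \<Longrightarrow> continuous_on UNIV f \<Longrightarrow> f \<in> borel_measurable M"
  by (rule bor_meas) (auto intro: borel_measurable_continuous_onI)

lemma bor_pair:
  fixes M :: "'a::second_countable_topology measure" and N :: "'b::second_countable_topology measure"
  assumes "bor M" "bor N" shows "bor (M \<Otimes>\<^sub>M N)"
proof -
  have "(\<lambda>p. (fst p, snd p)) \<in> measurable (M \<Otimes>\<^sub>M N) (borel \<Otimes>\<^sub>M borel)"
    using assms unfolding bor_def
    by (intro measurable_Pair) (auto intro: measurable_comp[OF measurable_fst, simplified comp_def]
        measurable_comp[OF measurable_snd, simplified comp_def])
  then show ?thesis unfolding bor_def borel_prod by simp
qed

lemma bor_borel_sets: "sets M = sets borel \<Longrightarrow> bor M"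
  unfolding bor_def by (simp add: measurable_cong_sets[of M borel borel borel])

lemma bor_gauss: "bor (gauss_tmpl :: (real^'n::finite) measure)"
  by (rule bor_borel_sets) simp

lemma bor_lborel: "bor lborel"
  by (rule bor_borel_sets) simp

lemma haar_basic:
  assumes "orth_group_haar G \<mu>"
  shows "prob_space \<mu>" "space \<mu> = G" "sets \<mu> = sets (restrict_space borel G)" "compact G"
    "\<And>g. g \<in> G \<Longrightarrow> orthogonal_matrix g" "mat 1 \<in> G"
    "\<And>g h. g \<in> G \<Longrightarrow> h \<in> G \<Longrightarrow> g ** h \<in> G"
    "\<And>g. g \<in> G \<Longrightarrow> transpose g \<in> G"
    "\<And>g A. g \<in> G \<Longrightarrow> A \<in> sets \<mu> \<Longrightarrow> emeasure \<mu> ((\<lambda>h. g ** h) -` A \<inter> G) = emeasure \<mu> A"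
  using assms unfolding orth_group_haar_def by auto

lemma bor_mu: "orth_group_haar (G :: (real^'n^'n) set) \<mu> \<Longrightarrow> bor \<mu>"
proof -
  assume grp: "orth_group_haar G \<mu>"
  have "(\<lambda>x. x) \<in> measurable (restrict_space borel G) borel"
    by (rule measurable_restrict_space1) simp
  then show ?thesis unfolding bor_def
    by (subst measurable_cong_sets[OF haar_basic(3)[OF grp] refl])
qed

lemma haar_left:
  fixes G :: "(real^'n^'n) set"
  assumes grp: "orth_group_haar G \<mu>" and g: "g \<in> G"
  shows "(\<lambda>h. g ** h) \<in> measurable \<mu> \<mu>" "distr \<mu> \<mu> (\<lambda>h. g ** h) = \<mu>"
proof -
  note B = haar_basic[OF grp]
  have c0: "continuous_on UNIV (\<lambda>h::real^'n^'n. (g, h))" by (intro continuous_intros)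
  have c: "(\<lambda>h::real^'n^'n. g ** h) \<in> borel_measurable borel"
    using continuous_on_compose2[OF cont_mm c0]
    by (intro borel_measurable_continuous_onI) auto
  have "(\<lambda>h. g ** h) \<in> measurable (restrict_space borel G) (restrict_space borel G)"
    by (rule measurable_restrict_space3[OF c]) (use B(7) g in auto)
  then show m: "(\<lambda>h. g ** h) \<in> measurable \<mu> \<mu>"
    using measurable_cong_sets[OF B(3) B(3)] by simp
  show "distr \<mu> \<mu> (\<lambda>h. g ** h) = \<mu>"
  proof (rule measure_eqI)
    show "sets (distr \<mu> \<mu> (\<lambda>h. g ** h)) = sets \<mu>" by simp
    fix A assume "A \<in> sets (distr \<mu> \<mu> (\<lambda>h. g ** h))"
    then have A: "A \<in> sets \<mu>" by simp
    show "emeasure (distr \<mu> \<mu> (\<lambda>h. g ** h)) A = emeasure \<mu> A"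
      using emeasure_distr[OF m A] B(2) B(9)[OF g A] by simp
  qed
qed

lemma haar_left_int:
  fixes f :: "real^'n^'n \<Rightarrow> real"
  assumes grp: "orth_group_haar G \<mu>" and g: "g \<in> G" and f: "f \<in> borel_measurable \<mu>"
  shows "(\<integral>h. f (g ** h) \<partial>\<mu>) = (\<integral>h. f h \<partial>\<mu>)"
proof -
  have "(\<integral>h. f h \<partial>\<mu>) = (\<integral>h. f h \<partial>distr \<mu> \<mu> (\<lambda>h. g ** h))"
    using haar_left(2)[OF grp g] by simp
  also have "\<dots> = (\<integral>h. f (g ** h) \<partial>\<mu>)"
    by (rule integral_distr[OF haar_left(1)[OF grp g] f])
  finally show ?thesis by simp
qed

lemma haar_inv_int:
  fixes f :: "real^'n^'n \<Rightarrow> real"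
  assumes grp: "orth_group_haar G \<mu>" and f: "continuous_on UNIV f" and bnd: "\<And>g. g \<in> G \<Longrightarrow> \<bar>f g\<bar> \<le> B"
  shows "(\<integral>g. f (transpose g) \<partial>\<mu>) = (\<integral>g. f g \<partial>\<mu>)"
proof -
  note Bs = haar_basic[OF grp]
  interpret P: prob_space \<mu> by (rule Bs(1))
  interpret PP: pair_sigma_finite \<mu> \<mu> by unfold_locales
  interpret PPP: pair_prob_space \<mu> \<mu> by unfold_locales
  have bm: "bor \<mu>" by (rule bor_mu[OF grp])
  have bmm: "bor (\<mu> \<Otimes>\<^sub>M \<mu>)" by (rule bor_pair[OF bm bm])
  have c1: "continuous_on UNIV (\<lambda>p::((real^'n^'n) \<times> (real^'n^'n)). (transpose (fst p), snd p))"
    by (intro continuous_on_Pair continuous_on_compose2[OF cont_tr] continuous_intros) auto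
  have c2: "continuous_on UNIV (\<lambda>p::((real^'n^'n) \<times> (real^'n^'n)). transpose (fst p) ** snd p)"
    using continuous_on_compose2[OF cont_mm c1] by simp
  have cF: "continuous_on UNIV (\<lambda>p::((real^'n^'n) \<times> (real^'n^'n)). f (transpose (fst p) ** snd p))"
    using continuous_on_compose2[OF f c2] by simp
  have fm: "f \<in> borel_measurable \<mu>" by (rule bor_meas_cont[OF bm f])
  have ftm: "(\<lambda>g. f (transpose g)) \<in> borel_measurable \<mu>"
    by (rule bor_meas_cont[OF bm], rule continuous_on_compose2[OF f cont_tr]) auto
  have Fm: "(\<lambda>p::((real^'n^'n) \<times> (real^'n^'n)). f (transpose (fst p) ** snd p)) \<in> borel_measurable (\<mu> \<Otimes>\<^sub>M \<mu>)"
    by (rule bor_meas_cont[OF bmm cF])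
  have Fi: "integrable (\<mu> \<Otimes>\<^sub>M \<mu>) (\<lambda>(x, y). f (transpose x ** y))"
  proof (rule PPP.P.integrable_const_bound[where B=B])
    show "AE p in \<mu> \<Otimes>\<^sub>M \<mu>. norm (case p of (x, y) \<Rightarrow> f (transpose x ** y)) \<le> B"
      by (rule AE_I2) (auto simp: space_pair_measure Bs(2) intro!: bnd Bs(7) Bs(8))
    show "(\<lambda>(x, y). f (transpose x ** y)) \<in> borel_measurable (\<mu> \<Otimes>\<^sub>M \<mu>)"
      using Fm by (simp add: case_prod_beta)
  qed
  have "(\<integral>g. f g \<partial>\<mu>) = (\<integral>x. (\<integral>y. f (transpose x ** y) \<partial>\<mu>) \<partial>\<mu>)"
  proof -
    have "(\<integral>x. (\<integral>y. f (transpose x ** y) \<partial>\<mu>) \<partial>\<mu>) = (\<integral>x. (\<integral>y. f y \<partial>\<mu>) \<partial>\<mu>)"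
      by (rule Bochner_Integration.integral_cong[OF refl], rule haar_left_int[OF grp _ fm])
         (use Bs in auto)
    then show ?thesis by (simp add: P.prob_space)
  qed
  also have "\<dots> = (\<integral>y. (\<integral>x. f (transpose x ** y) \<partial>\<mu>) \<partial>\<mu>)"
    using PP.Fubini_integral[OF Fi] by simp
  also have "\<dots> = (\<integral>y. (\<integral>x. f (transpose x) \<partial>\<mu>) \<partial>\<mu>)"
  proof (rule Bochner_Integration.integral_cong[OF refl])
    fix y assume y: "y \<in> space \<mu>"
    have "(\<integral>x. f (transpose x ** y) \<partial>\<mu>) = (\<integral>x. f (transpose (transpose y ** x)) \<partial>\<mu>)"
      by (simp add: matrix_transpose_mul)
    also have "\<dots> = (\<integral>x. f (transpose x) \<partial>\<mu>)"
      by (rule haar_left_int[OF grp _ ftm, of "transpose y"]) (use Bs y in auto)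
    finally show "(\<integral>x. f (transpose x ** y) \<partial>\<mu>) = (\<integral>x. f (transpose x) \<partial>\<mu>)" .
  qed
  also have "\<dots> = (\<integral>x. f (transpose x) \<partial>\<mu>)" by (simp add: P.prob_space)
  finally show ?thesis by simp
qed

lemma norm_orth: "orthogonal_matrix (g::real^'n^'n) \<Longrightarrow> norm (g *v t) = norm t"
proof -
  assume g: "orthogonal_matrix g"
  have "orthogonal_transformation (\<lambda>v. g *v v)"
    using g by (simp add: orthogonal_transformation_matrix matrix_vector_mul_linear)
  then show ?thesis by (simp add: orthogonal_transformation_norm)
qed

lemma abs_inner_orth:
  assumes "orthogonal_matrix (g::real^'n^'n)" "norm x \<le> 1"
  shows "\<bar>x \<bullet> (g *v t)\<bar> \<le> norm t"
proof -
  have "\<bar>x \<bullet> (g *v t)\<bar> \<le> norm x * norm (g *v t)" by (rule Cauchy_Schwarz_ineq2)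
  also have "\<dots> \<le> 1 * norm t" using assms by (intro mult_mono) (auto simp: norm_orth)
  finally show ?thesis by simp
qed

lemma psi_Some: "psi \<mu> x (Some t) \<tau> = measure \<mu> {g \<in> space \<mu>. x \<bullet> (g *v t) \<le> \<tau>}"
  by simp

lemma kernel_pointwise:
  fixes G :: "(real^'n^'n) set" and x z t :: "real^'n"
  assumes grp: "orth_group_haar G \<mu>" and nx: "norm x \<le> 1" and nz: "norm z \<le> 1"
    and nt: "norm t \<le> s"
  shows "(LBINT \<tau>=-s..s. psi \<mu> x (Some t) \<tau> * psi \<mu> z (Some t) \<tau>)
       = s - (\<integral>p. max (x \<bullet> (fst p *v t)) (z \<bullet> (snd p *v t)) \<partial>(\<mu> \<Otimes>\<^sub>M \<mu>))"
proof -
  note Bs = haar_basic[OF grp]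
  interpret P: prob_space \<mu> by (rule Bs(1))
  interpret PP: pair_prob_space \<mu> \<mu> by unfold_locales
  interpret PL: pair_sigma_finite "\<mu> \<Otimes>\<^sub>M \<mu>" lborel by unfold_locales
  define m where "m p = max (x \<bullet> (fst p *v t)) (z \<bullet> (snd p *v t))" for p :: "(real^'n^'n) \<times> (real^'n^'n)"
  have bm: "bor \<mu>" by (rule bor_mu[OF grp])
  have bmm: "bor (\<mu> \<Otimes>\<^sub>M \<mu>)" by (rule bor_pair[OF bm bm])
  have cm: "continuous_on UNIV m"
  proof -
    have c1: "continuous_on UNIV (\<lambda>p::((real^'n^'n) \<times> (real^'n^'n)). fst p *v t)"
      using continuous_on_compose2[OF cont_mv, of UNIV "\<lambda>p. (fst p, t)"] by (simp add: continuous_intros)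
    have c2: "continuous_on UNIV (\<lambda>p::((real^'n^'n) \<times> (real^'n^'n)). snd p *v t)"
      using continuous_on_compose2[OF cont_mv, of UNIV "\<lambda>p. (snd p, t)"] by (simp add: continuous_intros)
    show ?thesis unfolding m_def by (intro continuous_intros c1 c2)
  qed
  have mm[measurable]: "m \<in> borel_measurable (\<mu> \<Otimes>\<^sub>M \<mu>)" by (rule bor_meas_cont[OF bmm cm])
  have spM: "space (\<mu> \<Otimes>\<^sub>M \<mu>) = G \<times> G" by (simp add: space_pair_measure Bs(2))
  have mb: "\<bar>m p\<bar> \<le> s" if "p \<in> space (\<mu> \<Otimes>\<^sub>M \<mu>)" for p
  proof -
    have "orthogonal_matrix (fst p)" "orthogonal_matrix (snd p)" using that spM Bs(5) by auto
    then have "\<bar>x \<bullet> (fst p *v t)\<bar> \<le> norm t" "\<bar>z \<bullet> (snd p *v t)\<bar> \<le> norm t"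
      using abs_inner_orth nx nz by auto
    then show ?thesis using nt unfolding m_def by auto
  qed
  have s0: "0 \<le> s" using nt norm_ge_zero order_trans by blast
  define F where "F \<tau> = psi \<mu> x (Some t) \<tau> * psi \<mu> z (Some t) \<tau>" for \<tau>
  define J where "J p \<tau> = (if -s \<le> \<tau> \<and> \<tau> \<le> s \<and> m p \<le> \<tau> then 1 else 0 :: ennreal)" for p \<tau>
  have Jm: "case_prod J \<in> borel_measurable ((\<mu> \<Otimes>\<^sub>M \<mu>) \<Otimes>\<^sub>M lborel)"
    unfolding J_def by measurable
  have HJ: "ennreal (indicator {-s..s} \<tau> * F \<tau>) = (\<integral>\<^sup>+p. J p \<tau> \<partial>(\<mu> \<Otimes>\<^sub>M \<mu>))" for \<tau>
  proof (cases "-s \<le> \<tau> \<and> \<tau> \<le> s")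
    case False
    then show ?thesis by (auto simp: J_def indicator_def)
  next
    case True
    define A where "A = {g \<in> space \<mu>. x \<bullet> (g *v t) \<le> \<tau>}"
    define B where "B = {g \<in> space \<mu>. z \<bullet> (g *v t) \<le> \<tau>}"
    have cA: "continuous_on UNIV (\<lambda>g::real^'n^'n. x \<bullet> (g *v t))"
      using continuous_on_compose2[OF cont_mv, of UNIV "\<lambda>g. (g, t)"] by (simp add: continuous_intros)
    have cB: "continuous_on UNIV (\<lambda>g::real^'n^'n. z \<bullet> (g *v t))"
      using continuous_on_compose2[OF cont_mv, of UNIV "\<lambda>g. (g, t)"] by (simp add: continuous_intros)
    have [measurable]: "(\<lambda>g::real^'n^'n. x \<bullet> (g *v t)) \<in> borel_measurable \<mu>" by (rule bor_meas_cont[OF bm cA])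
    have [measurable]: "(\<lambda>g::real^'n^'n. z \<bullet> (g *v t)) \<in> borel_measurable \<mu>" by (rule bor_meas_cont[OF bm cB])
    have A[measurable]: "A \<in> sets \<mu>" unfolding A_def by measurable
    have B[measurable]: "B \<in> sets \<mu>" unfolding B_def by measurable
    have "ennreal (indicator {-s..s} \<tau> * F \<tau>) = ennreal (measure \<mu> A * measure \<mu> B)"
      using True by (simp add: F_def A_def B_def)
    also have "\<dots> = emeasure \<mu> A * emeasure \<mu> B"
      by (simp add: P.emeasure_eq_measure ennreal_mult)
    also have "\<dots> = emeasure (\<mu> \<Otimes>\<^sub>M \<mu>) (A \<times> B)"
      using P.emeasure_pair_measure_Times[OF A B] by simp
    also have "\<dots> = (\<integral>\<^sup>+p. indicator (A \<times> B) p \<partial>(\<mu> \<Otimes>\<^sub>M \<mu>))"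
      by (rule nn_integral_indicator[symmetric]) (simp add: A B)
    also have "\<dots> = (\<integral>\<^sup>+p. J p \<tau> \<partial>(\<mu> \<Otimes>\<^sub>M \<mu>))"
      by (rule nn_integral_cong)
         (use True in \<open>auto simp: J_def A_def B_def m_def indicator_def spM Bs(2)\<close>)
    finally show ?thesis .
  qed
  have Jint: "(\<integral>\<^sup>+\<tau>. J p \<tau> \<partial>lborel) = ennreal (s - m p)" if p: "p \<in> space (\<mu> \<Otimes>\<^sub>M \<mu>)" for p
  proof -
    have "(\<integral>\<^sup>+\<tau>. J p \<tau> \<partial>lborel) = (\<integral>\<^sup>+\<tau>. indicator {m p..s} \<tau> \<partial>lborel)"
      by (rule nn_integral_cong) (use mb[OF p] in \<open>auto simp: J_def indicator_def\<close>)
    also have "\<dots> = ennreal (s - m p)"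
      using mb[OF p] by simp
    finally show ?thesis .
  qed
  have imm: "integrable (\<mu> \<Otimes>\<^sub>M \<mu>) m"
    by (rule PP.P.integrable_const_bound[where B=s]) (use mb in auto)
  have is_m: "integrable (\<mu> \<Otimes>\<^sub>M \<mu>) (\<lambda>p. s - m p)" using imm by simp
  have Fmeas: "(\<lambda>\<tau>. indicator {-s..s} \<tau> * F \<tau>) \<in> borel_measurable lborel"
  proof -
    have "(\<lambda>\<tau>. enn2real (\<integral>\<^sup>+p. J p \<tau> \<partial>(\<mu> \<Otimes>\<^sub>M \<mu>))) \<in> borel_measurable lborel"
      using Jm by measurable
    moreover have "enn2real (\<integral>\<^sup>+p. J p \<tau> \<partial>(\<mu> \<Otimes>\<^sub>M \<mu>)) = indicator {-s..s} \<tau> * F \<tau>" for \<tau>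
    proof -
      have "0 \<le> indicator {-s..s} \<tau> * F \<tau>" by (simp add: F_def)
      then show ?thesis using HJ[of \<tau>, symmetric] by simp
    qed
    ultimately show ?thesis by simp
  qed
  have "(LBINT \<tau>=-s..s. F \<tau>) = (\<integral>\<tau>. indicator {-s..s} \<tau> * F \<tau> \<partial>lborel)"
    using s0 by (simp add: interval_integral_Icc set_lebesgue_integral_def)
  also have "\<dots> = enn2real (\<integral>\<^sup>+\<tau>. ennreal (indicator {-s..s} \<tau> * F \<tau>) \<partial>lborel)"
    by (rule integral_eq_nn_integral[OF Fmeas]) (simp add: F_def)
  also have "(\<integral>\<^sup>+\<tau>. ennreal (indicator {-s..s} \<tau> * F \<tau>) \<partial>lborel)
      = (\<integral>\<^sup>+\<tau>. (\<integral>\<^sup>+p. J p \<tau> \<partial>(\<mu> \<Otimes>\<^sub>M \<mu>)) \<partial>lborel)"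
    by (simp add: HJ)
  also have "\<dots> = (\<integral>\<^sup>+p. (\<integral>\<^sup>+\<tau>. J p \<tau> \<partial>lborel) \<partial>(\<mu> \<Otimes>\<^sub>M \<mu>))"
    by (rule PL.Fubini'[OF Jm])
  also have "\<dots> = (\<integral>\<^sup>+p. ennreal (s - m p) \<partial>(\<mu> \<Otimes>\<^sub>M \<mu>))"
    by (rule nn_integral_cong) (simp add: Jint)
  also have "\<dots> = ennreal (\<integral>p. s - m p \<partial>(\<mu> \<Otimes>\<^sub>M \<mu>))"
    by (rule nn_integral_eq_integral[OF is_m], rule AE_I2) (use mb in fastforce)
  also have "enn2real \<dots> = (\<integral>p. s - m p \<partial>(\<mu> \<Otimes>\<^sub>M \<mu>))"
  proof -
    have "0 \<le> (\<integral>p. s - m p \<partial>(\<mu> \<Otimes>\<^sub>M \<mu>))"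
      by (rule integral_nonneg_AE, rule AE_I2) (use mb in fastforce)
    then show ?thesis by simp
  qed
  also have "\<dots> = s - (\<integral>p. m p \<partial>(\<mu> \<Otimes>\<^sub>M \<mu>))"
    using imm by (simp add: PP.P.prob_space)
  finally show ?thesis unfolding F_def m_def .
qed

lemma cont_mv_fix: "continuous_on UNIV (\<lambda>m::real^'n^'n. m *v z)"
  using continuous_on_compose2[OF cont_mv, of UNIV "\<lambda>m. (m, z)"] by (simp add: continuous_intros)

lemma norm_vmul_orth:
  assumes "orthogonal_matrix (g::real^'n^'n)" shows "norm (x v* g) = norm x"
proof -
  have "x v* g = transpose g *v x" by simp
  also have "norm \<dots> = norm x" using assms by (intro norm_orth) simp
  finally show ?thesis .
qed

lemma dG_eq:
  fixes G :: "(real^'n^'n) set" and x z :: "real^'n"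
  assumes grp: "orth_group_haar G \<mu>" and nx: "norm x \<le> 1" and nz: "norm z \<le> 1"
  shows "(\<integral>p. norm (x v* fst p - z v* snd p) \<partial>(\<mu> \<Otimes>\<^sub>M \<mu>)) = (\<integral>g. (\<integral>g'. norm (g *v x - g' *v z) \<partial>\<mu>) \<partial>\<mu>)"
proof -
  note Bs = haar_basic[OF grp]
  interpret P: prob_space \<mu> by (rule Bs(1))
  interpret PP: pair_prob_space \<mu> \<mu> by unfold_locales
  have bm: "bor \<mu>" by (rule bor_mu[OF grp])
  have bmm: "bor (\<mu> \<Otimes>\<^sub>M \<mu>)" by (rule bor_pair[OF bm bm])
  have orth: "g \<in> G \<Longrightarrow> orthogonal_matrix g" for g using Bs(5) by blast
  have nvm: "g \<in> G \<Longrightarrow> norm (y v* g) \<le> 1" if "norm y \<le> 1" for g y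
    using norm_vmul_orth[OF orth] that by simp
  have nmv: "g \<in> G \<Longrightarrow> norm (g *v y) \<le> 1" if "norm y \<le> 1" for g y
    using norm_orth[OF orth] that by simp
  have cvm: "continuous_on UNIV (\<lambda>m::real^'n^'n. y v* m)" for y
  proof -
    have "(\<lambda>m::real^'n^'n. y v* m) = (\<lambda>m. transpose m *v y)" by simp
    moreover have "continuous_on UNIV (\<lambda>m::real^'n^'n. transpose m *v y)"
      using continuous_on_compose2[OF cont_mv_fix cont_tr] by simp
    ultimately show ?thesis by simp
  qed
  define F1 where "F1 p = norm (x v* fst p - z v* snd p)" for p :: "(real^'n^'n) \<times> (real^'n^'n)"
  define F2 where "F2 p = norm (x v* fst p - snd p *v z)" for p :: "(real^'n^'n) \<times> (real^'n^'n)"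
  define F3 where "F3 p = norm (fst p *v x - snd p *v z)" for p :: "(real^'n^'n) \<times> (real^'n^'n)"
  have c1: "continuous_on UNIV F1" unfolding F1_def
    by (intro continuous_intros continuous_on_compose2[OF cvm] continuous_on_fst continuous_on_snd continuous_on_id) auto
  have c2: "continuous_on UNIV F2" unfolding F2_def
    by (intro continuous_intros continuous_on_compose2[OF cvm] continuous_on_compose2[OF cont_mv_fix]) auto
  have c3: "continuous_on UNIV F3" unfolding F3_def
    by (intro continuous_intros continuous_on_compose2[OF cont_mv_fix]) auto
  have bnd: "p \<in> space (\<mu> \<Otimes>\<^sub>M \<mu>) \<Longrightarrow> F p \<le> 2 \<and> 0 \<le> F p" if "F \<in> {F1, F2, F3}" for F p
  proof -
    assume "p \<in> space (\<mu> \<Otimes>\<^sub>M \<mu>)"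
    then have g: "fst p \<in> G" "snd p \<in> G" by (auto simp: space_pair_measure Bs(2))
    have t: "norm (a - b) \<le> 2" if "norm a \<le> 1" "norm b \<le> 1" for a b :: "real^'n"
      using norm_triangle_ineq4[of a b] that by simp
    show ?thesis using that g nx nz
      by (auto simp: F1_def F2_def F3_def intro!: t nvm nmv)
  qed
  have int: "integrable (\<mu> \<Otimes>\<^sub>M \<mu>) F" if "F \<in> {F1, F2, F3}" "continuous_on UNIV F" for F
    by (rule PP.P.integrable_const_bound[where B=2], rule AE_I2)
       (use bnd[OF that(1)] bor_meas_cont[OF bmm that(2)] in auto)
  have i1: "integrable (\<mu> \<Otimes>\<^sub>M \<mu>) F1" using int c1 by auto
  have i2: "integrable (\<mu> \<Otimes>\<^sub>M \<mu>) F2" using int c2 by auto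
  have i3: "integrable (\<mu> \<Otimes>\<^sub>M \<mu>) F3" using int c3 by auto
  have "(\<integral>p. F1 p \<partial>(\<mu> \<Otimes>\<^sub>M \<mu>)) = (\<integral>g. (\<integral>g'. F1 (g, g') \<partial>\<mu>) \<partial>\<mu>)"
    by (rule PP.integral_fst'[OF i1, symmetric])
  also have "\<dots> = (\<integral>g. (\<integral>g'. F2 (g, g') \<partial>\<mu>) \<partial>\<mu>)"
  proof (rule Bochner_Integration.integral_cong[OF refl])
    fix g assume g: "g \<in> space \<mu>"
    have cc: "continuous_on UNIV (\<lambda>m::real^'n^'n. norm (x v* g - m *v z))"
      by (intro continuous_intros cont_mv_fix)
    have "(\<integral>g'. norm (x v* g - transpose g' *v z) \<partial>\<mu>) = (\<integral>g'. norm (x v* g - g' *v z) \<partial>\<mu>)"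
      by (rule haar_inv_int[OF grp cc, where B=2])
         (use bnd[of F2 "(g, _)"] g in \<open>auto simp: F2_def space_pair_measure Bs(2)\<close>)
    then show "(\<integral>g'. F1 (g, g') \<partial>\<mu>) = (\<integral>g'. F2 (g, g') \<partial>\<mu>)"
      by (simp add: F1_def F2_def)
  qed
  also have "\<dots> = (\<integral>g'. (\<integral>g. F2 (g, g') \<partial>\<mu>) \<partial>\<mu>)"
    using PP.Fubini_integral[of "\<lambda>g g'. F2 (g, g')"] i2 by (simp add: case_prod_beta)
  also have "\<dots> = (\<integral>g'. (\<integral>g. F3 (g, g') \<partial>\<mu>) \<partial>\<mu>)"
  proof (rule Bochner_Integration.integral_cong[OF refl])
    fix g' assume g': "g' \<in> space \<mu>"
    have cc: "continuous_on UNIV (\<lambda>m::real^'n^'n. norm (m *v x - g' *v z))"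
      by (intro continuous_intros cont_mv_fix)
    have "(\<integral>g. norm (transpose g *v x - g' *v z) \<partial>\<mu>) = (\<integral>g. norm (g *v x - g' *v z) \<partial>\<mu>)"
      by (rule haar_inv_int[OF grp cc, where B=2])
         (use bnd[of F3 "(_, g')"] g' in \<open>auto simp: F3_def space_pair_measure Bs(2)\<close>)
    then show "(\<integral>g. F2 (g, g') \<partial>\<mu>) = (\<integral>g. F3 (g, g') \<partial>\<mu>)"
      by (simp add: F2_def F3_def)
  qed
  also have "\<dots> = (\<integral>g. (\<integral>g'. F3 (g, g') \<partial>\<mu>) \<partial>\<mu>)"
    using PP.Fubini_integral[of "\<lambda>g g'. F3 (g, g')"] i3 by (simp add: case_prod_beta)
  finally show ?thesis by (simp add: F1_def F3_def)
qed

lemma max_half: "max (\<alpha>::real) \<beta> = (\<alpha> + \<beta>) / 2 + \<bar>\<alpha> - \<beta>\<bar> / 2"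
  by (cases "\<alpha> \<le> \<beta>") (auto simp: max_def abs_if field_simps)

lemma gauss_int_ind:
  fixes c :: "real^'n::finite" and h :: "real^'n \<Rightarrow> real"
  assumes A: "A \<in> sets borel" and h[measurable]: "h \<in> borel_measurable borel"
    and hb: "\<And>\<nu>. \<bar>h \<nu>\<bar> \<le> \<bar>c \<bullet> \<nu>\<bar>"
  shows "integrable gauss_tmpl (\<lambda>\<nu>. indicator A \<nu> * h \<nu>)"
proof (rule Bochner_Integration.integrable_bound[OF gauss_abs_inner(2)[of c]])
  show "(\<lambda>\<nu>. indicator A \<nu> * h \<nu>) \<in> borel_measurable gauss_tmpl"
    using A by measurable
  show "AE \<nu> in gauss_tmpl. norm (indicator A \<nu> * h \<nu>) \<le> norm \<bar>c \<bullet> \<nu>\<bar>"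
    by (rule AE_I2) (use hb in \<open>auto simp: indicator_def abs_mult\<close>)
qed

lemma gauss_good_max:
  fixes a b :: "real^'n::finite" and s :: real
  shows "(\<integral>\<nu>. indicator {\<nu>. (norm \<nu>)\<^sup>2 < s} \<nu> * max (a \<bullet> \<nu>) (b \<bullet> \<nu>) \<partial>gauss_tmpl)
       = (\<integral>\<nu>. indicator {\<nu>. (norm \<nu>)\<^sup>2 < s} \<nu> * \<bar>((1/2) *\<^sub>R (a - b)) \<bullet> \<nu>\<bar> \<partial>gauss_tmpl)"
proof -
  define A where "A = {\<nu>::real^'n. (norm \<nu>)\<^sup>2 < s}"
  have A: "A \<in> sets borel" unfolding A_def by measurable
  define c where "c = (1/2) *\<^sub>R (a + b)"
  define v where "v = (1/2) *\<^sub>R (a - b)"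
  have pw: "indicator A \<nu> * max (a \<bullet> \<nu>) (b \<bullet> \<nu>) = indicator A \<nu> * (c \<bullet> \<nu>) + indicator A \<nu> * \<bar>v \<bullet> \<nu>\<bar>" for \<nu>
  proof -
    have e1: "c \<bullet> \<nu> = (a \<bullet> \<nu> + b \<bullet> \<nu>) / 2" by (simp add: c_def inner_add_left)
    have "v \<bullet> \<nu> = (a \<bullet> \<nu> - b \<bullet> \<nu>) / 2" by (simp add: v_def inner_diff_left)
    then have e2: "\<bar>v \<bullet> \<nu>\<bar> = \<bar>a \<bullet> \<nu> - b \<bullet> \<nu>\<bar> / 2" by simp
    show ?thesis by (simp only: e1 e2 max_half distrib_left)
  qed
  have i1: "integrable gauss_tmpl (\<lambda>\<nu>. indicator A \<nu> * (c \<bullet> \<nu>))"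
    by (rule gauss_int_ind[OF A, of _ c]) auto
  have i2: "integrable gauss_tmpl (\<lambda>\<nu>. indicator A \<nu> * \<bar>v \<bullet> \<nu>\<bar>)"
    by (rule gauss_int_ind[OF A, of _ v]) auto
  have z: "(\<integral>\<nu>. indicator A \<nu> * (c \<bullet> \<nu>) \<partial>gauss_tmpl) = 0"
    by (rule gauss_integral_odd) (use A in \<open>measurable, auto simp: A_def indicator_def\<close>)
  show ?thesis
    unfolding A_def[symmetric] v_def[symmetric] pw
    using i1 i2 z by simp
qed

lemma gauss_good_abs:
  fixes v :: "real^'n::finite" and s :: real
  shows "(\<integral>\<nu>. indicator {\<nu>. (norm \<nu>)\<^sup>2 < s} \<nu> * \<bar>v \<bullet> \<nu>\<bar> \<partial>gauss_tmpl)
       = norm v * gsig CARD('n) * sqrt (2 / pi) - (\<integral>\<nu>. indicator {\<nu>. s \<le> (norm \<nu>)\<^sup>2} \<nu> * \<bar>v \<bullet> \<nu>\<bar> \<partial>gauss_tmpl)"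
proof -
  define A where "A = {\<nu>::real^'n. (norm \<nu>)\<^sup>2 < s}"
  define B where "B = {\<nu>::real^'n. s \<le> (norm \<nu>)\<^sup>2}"
  have A: "A \<in> sets borel" unfolding A_def by measurable
  have B: "B \<in> sets borel" unfolding B_def by measurable
  have i1: "integrable gauss_tmpl (\<lambda>\<nu>. indicator A \<nu> * \<bar>v \<bullet> \<nu>\<bar>)"
    by (rule gauss_int_ind[OF A, of _ v]) auto
  have i2: "integrable gauss_tmpl (\<lambda>\<nu>. indicator B \<nu> * \<bar>v \<bullet> \<nu>\<bar>)"
    by (rule gauss_int_ind[OF B, of _ v]) auto
  have pw: "\<bar>v \<bullet> \<nu>\<bar> = indicator A \<nu> * \<bar>v \<bullet> \<nu>\<bar> + indicator B \<nu> * \<bar>v \<bullet> \<nu>\<bar>" for \<nu>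
    by (auto simp: A_def B_def indicator_def)
  have "norm v * gsig CARD('n) * sqrt (2 / pi) = (\<integral>\<nu>. \<bar>v \<bullet> \<nu>\<bar> \<partial>gauss_tmpl)"
    by (rule gauss_abs_inner(1)[symmetric])
  also have "\<dots> = (\<integral>\<nu>. indicator A \<nu> * \<bar>v \<bullet> \<nu>\<bar> + indicator B \<nu> * \<bar>v \<bullet> \<nu>\<bar> \<partial>gauss_tmpl)"
    by (subst pw) (rule refl)
  also have "\<dots> = (\<integral>\<nu>. indicator A \<nu> * \<bar>v \<bullet> \<nu>\<bar> \<partial>gauss_tmpl) + (\<integral>\<nu>. indicator B \<nu> * \<bar>v \<bullet> \<nu>\<bar> \<partial>gauss_tmpl)"
    using i1 i2 by simp
  finally show ?thesis unfolding A_def B_def by simp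
qed

lemma bor_M2Q:
  fixes G :: "(real^'n^'n) set"
  assumes grp: "orth_group_haar G \<mu>"
  shows "bor ((\<mu> \<Otimes>\<^sub>M \<mu>) \<Otimes>\<^sub>M (gauss_tmpl :: (real^'n) measure))"
  by (intro bor_pair bor_mu[OF grp] bor_gauss)

lemma cont_vdot:
  "continuous_on UNIV (\<lambda>q::(((real^'n^'n) \<times> (real^'n^'n)) \<times> (real^'n)).
     ((1/2) *\<^sub>R (x v* fst (fst q) - z v* snd (fst q))) \<bullet> snd q)"
proof -
  have cvm: "continuous_on UNIV (\<lambda>m::real^'n^'n. y v* m)" for y
  proof -
    have "(\<lambda>m::real^'n^'n. y v* m) = (\<lambda>m. transpose m *v y)" by simp
    moreover have "continuous_on UNIV (\<lambda>m::real^'n^'n. transpose m *v y)"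
      using continuous_on_compose2[OF cont_mv_fix cont_tr] by simp
    ultimately show ?thesis by simp
  qed
  show ?thesis
    by (intro continuous_intros continuous_on_compose2[OF cvm]) auto
qed

lemma cont_mdot:
  "continuous_on UNIV (\<lambda>q::(((real^'n^'n) \<times> (real^'n^'n)) \<times> (real^'n)).
     max (x \<bullet> (fst (fst q) *v snd q)) (z \<bullet> (snd (fst q) *v snd q)))"
proof -
  have c1: "continuous_on UNIV (\<lambda>q::(((real^'n^'n) \<times> (real^'n^'n)) \<times> (real^'n)). fst (fst q) *v snd q)"
    using continuous_on_compose2[OF cont_mv, of UNIV "\<lambda>q. (fst (fst q), snd q)"] by (simp add: continuous_intros)
  have c2: "continuous_on UNIV (\<lambda>q::(((real^'n^'n) \<times> (real^'n^'n)) \<times> (real^'n)). snd (fst q) *v snd q)"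
    using continuous_on_compose2[OF cont_mv, of UNIV "\<lambda>q. (snd (fst q), snd q)"] by (simp add: continuous_intros)
  show ?thesis by (intro continuous_intros c1 c2)
qed

lemma K_main:
  fixes G :: "(real^'n^'n) set" and x z :: "real^'n"
  assumes grp: "orth_group_haar G \<mu>" and nx: "norm x \<le> 1" and nz: "norm z \<le> 1" and eps: "\<epsilon> > 0"
  defines "s \<equiv> 1 + \<epsilon>"
  defines "v \<equiv> (\<lambda>p::(real^'n^'n) \<times> (real^'n^'n). (1/2) *\<^sub>R (x v* fst p - z v* snd p))"
  defines "r \<equiv> (\<lambda>p. \<integral>\<nu>. indicator {\<nu>::real^'n. s \<le> (norm \<nu>)\<^sup>2} \<nu> * \<bar>v p \<bullet> \<nu>\<bar> \<partial>gauss_tmpl)"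
  shows "K_s \<mu> \<epsilon> x z = (s - d_G \<mu> x z) - s * measure gauss_tmpl {\<nu>::real^'n. s \<le> (norm \<nu>)\<^sup>2}
            + (\<integral>p. r p \<partial>(\<mu> \<Otimes>\<^sub>M \<mu>))"
    and "integrable (\<mu> \<Otimes>\<^sub>M \<mu>) r"
    and "\<And>p. p \<in> space (\<mu> \<Otimes>\<^sub>M \<mu>) \<Longrightarrow> norm (v p) \<le> 1"
    and "integrable gauss_tmpl (\<lambda>\<nu>. LBINT \<tau>=-(1+\<epsilon>)..(1+\<epsilon>). psi \<mu> x (template \<epsilon> \<nu>) \<tau> * psi \<mu> z (template \<epsilon> \<nu>) \<tau>)"
proof -
  note Bs = haar_basic[OF grp]
  interpret P: prob_space \<mu> by (rule Bs(1))
  interpret PP: pair_prob_space \<mu> \<mu> by unfold_locales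
  interpret Q: prob_space "gauss_tmpl :: (real^'n) measure" by (rule prob_space_gauss)
  interpret PQ: pair_prob_space "\<mu> \<Otimes>\<^sub>M \<mu>" "gauss_tmpl :: (real^'n) measure" by unfold_locales
  have s1: "s > 1" using eps unfolding s_def by simp
  define GD where "GD = {\<nu>::real^'n. (norm \<nu>)\<^sup>2 < s}"
  define BD where "BD = {\<nu>::real^'n. s \<le> (norm \<nu>)\<^sup>2}"
  have GDm[measurable]: "GD \<in> sets borel" unfolding GD_def by measurable
  have BDm[measurable]: "BD \<in> sets borel" unfolding BD_def by measurable
  define m where "m = (\<lambda>\<nu> (p::(real^'n^'n) \<times> (real^'n^'n)). max (x \<bullet> (fst p *v \<nu>)) (z \<bullet> (snd p *v \<nu>)))"
  define F where "F = (\<lambda>p \<nu>. indicator GD \<nu> * (s - m \<nu> p))"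
  have orth: "g \<in> G \<Longrightarrow> orthogonal_matrix g" for g using Bs(5) by blast
  have spM: "space (\<mu> \<Otimes>\<^sub>M \<mu>) = G \<times> G" by (simp add: space_pair_measure Bs(2))
  have good_le: "norm \<nu> \<le> s" if "\<nu> \<in> GD" for \<nu>
  proof (rule ccontr)
    assume "\<not> norm \<nu> \<le> s"
    then have "s * 1 < norm \<nu> * norm \<nu>" using s1 by (intro mult_strict_mono) auto
    then show False using that s1 unfolding GD_def by (simp add: power2_eq_square)
  qed
  have mb: "\<bar>m \<nu> p\<bar> \<le> norm \<nu>" if "p \<in> space (\<mu> \<Otimes>\<^sub>M \<mu>)" for p \<nu>
  proof -
    have "orthogonal_matrix (fst p)" "orthogonal_matrix (snd p)" using that spM orth by auto
    then have "\<bar>x \<bullet> (fst p *v \<nu>)\<bar> \<le> norm \<nu>" "\<bar>z \<bullet> (snd p *v \<nu>)\<bar> \<le> norm \<nu>"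
      using abs_inner_orth nx nz by auto
    then show ?thesis unfolding m_def by auto
  qed
  have bq: "bor ((\<mu> \<Otimes>\<^sub>M \<mu>) \<Otimes>\<^sub>M (gauss_tmpl :: (real^'n) measure))" by (rule bor_M2Q[OF grp])
  have mq[measurable]: "(\<lambda>q. m (snd q) (fst q)) \<in> borel_measurable ((\<mu> \<Otimes>\<^sub>M \<mu>) \<Otimes>\<^sub>M (gauss_tmpl :: (real^'n) measure))"
    by (rule bor_meas_cont[OF bq]) (use cont_mdot[of x z] in \<open>simp add: m_def\<close>)
  have Fm: "(\<lambda>(p, \<nu>). F p \<nu>) \<in> borel_measurable ((\<mu> \<Otimes>\<^sub>M \<mu>) \<Otimes>\<^sub>M (gauss_tmpl :: (real^'n) measure))"
    unfolding F_def case_prod_beta by measurable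
  have Fb: "\<bar>F p \<nu>\<bar> \<le> 2 * s" if "p \<in> space (\<mu> \<Otimes>\<^sub>M \<mu>)" for p \<nu>
  proof (cases "\<nu> \<in> GD")
    case True
    then show ?thesis using mb[OF that, of \<nu>] good_le[OF True] unfolding F_def by auto
  next
    case False
    then show ?thesis using s1 unfolding F_def by auto
  qed
  have Fi: "integrable ((\<mu> \<Otimes>\<^sub>M \<mu>) \<Otimes>\<^sub>M gauss_tmpl) (\<lambda>(p, \<nu>). F p \<nu>)"
    by (rule PQ.P.integrable_const_bound[where B="2 * s"], rule AE_I2)
       (use Fb Fm in \<open>auto simp: space_pair_measure\<close>)
  have step1_pw: "\<And>\<nu>. (LBINT \<tau>=-(1+\<epsilon>)..(1+\<epsilon>). psi \<mu> x (template \<epsilon> \<nu>) \<tau> * psi \<mu> z (template \<epsilon> \<nu>) \<tau>)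
        = (\<integral>p. F p \<nu> \<partial>(\<mu> \<Otimes>\<^sub>M \<mu>))"
  proof -
    fix \<nu> :: "real^'n"
    show "(LBINT \<tau>=-(1+\<epsilon>)..(1+\<epsilon>). psi \<mu> x (template \<epsilon> \<nu>) \<tau> * psi \<mu> z (template \<epsilon> \<nu>) \<tau>)
        = (\<integral>p. F p \<nu> \<partial>(\<mu> \<Otimes>\<^sub>M \<mu>))"
    proof (cases "\<nu> \<in> GD")
      case True
      have im: "integrable (\<mu> \<Otimes>\<^sub>M \<mu>) (m \<nu>)"
      proof (rule PP.P.integrable_const_bound[where B="norm \<nu>"], rule AE_I2)
        show "p \<in> space (\<mu> \<Otimes>\<^sub>M \<mu>) \<Longrightarrow> norm (m \<nu> p) \<le> norm \<nu>" for p using mb by simp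
        have "bor (\<mu> \<Otimes>\<^sub>M \<mu>)" by (intro bor_pair bor_mu[OF grp])
        moreover have "continuous_on UNIV (\<lambda>p. m \<nu> p)"
          using continuous_on_compose2[OF cont_mdot[of x z], of UNIV "\<lambda>p. (p, \<nu>)"]
          by (simp add: m_def continuous_intros)
        ultimately show "m \<nu> \<in> borel_measurable (\<mu> \<Otimes>\<^sub>M \<mu>)" using bor_meas_cont by blast
      qed
      have "template \<epsilon> \<nu> = Some \<nu>" using True unfolding GD_def s_def template_def by simp
      then have "(LBINT \<tau>=-(1+\<epsilon>)..(1+\<epsilon>). psi \<mu> x (template \<epsilon> \<nu>) \<tau> * psi \<mu> z (template \<epsilon> \<nu>) \<tau>)
          = s - (\<integral>p. m \<nu> p \<partial>(\<mu> \<Otimes>\<^sub>M \<mu>))"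
        using kernel_pointwise[OF grp nx nz good_le[OF True]] unfolding s_def m_def by simp
      also have "\<dots> = (\<integral>p. F p \<nu> \<partial>(\<mu> \<Otimes>\<^sub>M \<mu>))"
        using True im by (simp add: F_def PP.P.prob_space)
      finally show ?thesis .
    next
      case False
      have "template \<epsilon> \<nu> = None" using False unfolding GD_def s_def template_def by simp
      then show ?thesis using False by (simp add: F_def)
    qed
  qed
  have step1: "K_s \<mu> \<epsilon> x z = (\<integral>\<nu>. (\<integral>p. F p \<nu> \<partial>(\<mu> \<Otimes>\<^sub>M \<mu>)) \<partial>gauss_tmpl)"
    unfolding K_s_def by (rule Bochner_Integration.integral_cong[OF refl]) (rule step1_pw)
  show "integrable gauss_tmpl (\<lambda>\<nu>. LBINT \<tau>=-(1+\<epsilon>)..(1+\<epsilon>). psi \<mu> x (template \<epsilon> \<nu>) \<tau> * psi \<mu> z (template \<epsilon> \<nu>) \<tau>)"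
  proof -
    interpret QP: pair_sigma_finite "gauss_tmpl :: (real^'n) measure" "\<mu> \<Otimes>\<^sub>M \<mu>" by unfold_locales
    have "integrable (gauss_tmpl \<Otimes>\<^sub>M (\<mu> \<Otimes>\<^sub>M \<mu>)) (\<lambda>(\<nu>, p). F p \<nu>)"
      using PQ.integrable_product_swap[OF Fi] by (simp add: case_prod_beta)
    from QP.integrable_fst'[OF this]
    have "integrable gauss_tmpl (\<lambda>\<nu>. \<integral>p. F p \<nu> \<partial>(\<mu> \<Otimes>\<^sub>M \<mu>))" by simp
    then show ?thesis
      by (rule Bochner_Integration.integrable_cong[THEN iffD1, rotated 2])
         (use step1_pw in auto)
  qed
  have step2: "(\<integral>\<nu>. (\<integral>p. F p \<nu> \<partial>(\<mu> \<Otimes>\<^sub>M \<mu>)) \<partial>gauss_tmpl) = (\<integral>p. (\<integral>\<nu>. F p \<nu> \<partial>gauss_tmpl) \<partial>(\<mu> \<Otimes>\<^sub>M \<mu>))"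
    by (rule PQ.Fubini_integral[OF Fi])
  define PB where "PB = measure (gauss_tmpl :: (real^'n) measure) BD"
  define c where "c = gsig CARD('n) * sqrt (2 / pi)"
  have inner: "(\<integral>\<nu>. F p \<nu> \<partial>gauss_tmpl) = s * (1 - PB) - norm (v p) * c + r p"
    if p: "p \<in> space (\<mu> \<Otimes>\<^sub>M \<mu>)" for p
  proof -
    have mq1: "(\<lambda>\<nu>. m \<nu> p) \<in> borel_measurable gauss_tmpl"
    proof -
      have "continuous_on UNIV (\<lambda>\<nu>. m \<nu> p)"
        using continuous_on_compose2[OF cont_mdot[of x z], of UNIV "\<lambda>\<nu>. (p, \<nu>)"]
        by (simp add: m_def continuous_intros)
      then show ?thesis by (rule bor_meas_cont[OF bor_gauss])
    qed
    have i1: "integrable gauss_tmpl (\<lambda>\<nu>. indicator GD \<nu> * s)"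
      by (rule Q.integrable_const_bound[where B=s], rule AE_I2) (use s1 in \<open>auto simp: indicator_def\<close>)
    have i2: "integrable gauss_tmpl (\<lambda>\<nu>. indicator GD \<nu> * m \<nu> p)"
    proof (rule Q.integrable_const_bound[where B=s], rule AE_I2)
      show "norm (indicator GD \<nu> * m \<nu> p) \<le> s" for \<nu>
        using mb[OF p, of \<nu>] good_le[of \<nu>] s1 by (auto simp: indicator_def)
      show "(\<lambda>\<nu>. indicator GD \<nu> * m \<nu> p) \<in> borel_measurable gauss_tmpl"
        using mq1 by measurable
    qed
    have "(\<integral>\<nu>. F p \<nu> \<partial>gauss_tmpl) = (\<integral>\<nu>. indicator GD \<nu> * s - indicator GD \<nu> * m \<nu> p \<partial>gauss_tmpl)"
      unfolding F_def by (simp add: algebra_simps)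
    also have "\<dots> = (\<integral>\<nu>. indicator GD \<nu> * s \<partial>gauss_tmpl) - (\<integral>\<nu>. indicator GD \<nu> * m \<nu> p \<partial>gauss_tmpl)"
      using i1 i2 by simp
    also have "(\<integral>\<nu>. indicator GD \<nu> * s \<partial>gauss_tmpl) = s * (1 - PB)"
    proof -
      have "(\<integral>\<nu>. indicator GD \<nu> * s \<partial>gauss_tmpl) = measure gauss_tmpl GD * s" by simp
      moreover have "GD = space gauss_tmpl - BD" by (auto simp: GD_def BD_def)
      ultimately show ?thesis using Q.prob_compl[of BD] by (simp add: PB_def)
    qed
    also have "(\<integral>\<nu>. indicator GD \<nu> * m \<nu> p \<partial>gauss_tmpl) = (\<integral>\<nu>. indicator GD \<nu> * \<bar>v p \<bullet> \<nu>\<bar> \<partial>gauss_tmpl)"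
    proof -
      have "(\<integral>\<nu>. indicator GD \<nu> * m \<nu> p \<partial>gauss_tmpl)
          = (\<integral>\<nu>. indicator GD \<nu> * max ((x v* fst p) \<bullet> \<nu>) ((z v* snd p) \<bullet> \<nu>) \<partial>gauss_tmpl)"
        by (simp add: m_def dot_lmul_matrix)
      also have "\<dots> = (\<integral>\<nu>. indicator GD \<nu> * \<bar>v p \<bullet> \<nu>\<bar> \<partial>gauss_tmpl)"
        unfolding GD_def v_def by (rule gauss_good_max)
      finally show ?thesis .
    qed
    also have "(\<integral>\<nu>. indicator GD \<nu> * \<bar>v p \<bullet> \<nu>\<bar> \<partial>gauss_tmpl) = norm (v p) * c - r p"
      unfolding GD_def r_def c_def by (subst gauss_good_abs) (simp add: mult.assoc)
    finally show ?thesis by simp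
  qed
  show vb: "norm (v p) \<le> 1" if "p \<in> space (\<mu> \<Otimes>\<^sub>M \<mu>)" for p
  proof -
    have g: "orthogonal_matrix (fst p)" "orthogonal_matrix (snd p)" using that spM orth by auto
    have "norm (x v* fst p - z v* snd p) \<le> norm (x v* fst p) + norm (z v* snd p)" by (rule norm_triangle_ineq4)
    also have "\<dots> \<le> 2" using norm_vmul_orth[OF g(1), of x] norm_vmul_orth[OF g(2), of z] nx nz by simp
    finally show ?thesis unfolding v_def by simp
  qed
  have cvp: "continuous_on UNIV (\<lambda>p. norm (v p))"
  proof -
    have "continuous_on UNIV (\<lambda>p::(real^'n^'n) \<times> (real^'n^'n). ((1/2) *\<^sub>R (x v* fst p - z v* snd p)))"
    proof -
      have cvm: "continuous_on UNIV (\<lambda>m::real^'n^'n. y v* m)" for y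
      proof -
        have "(\<lambda>m::real^'n^'n. y v* m) = (\<lambda>m. transpose m *v y)" by simp
        moreover have "continuous_on UNIV (\<lambda>m::real^'n^'n. transpose m *v y)"
          using continuous_on_compose2[OF cont_mv_fix cont_tr] by simp
        ultimately show ?thesis by simp
      qed
      show ?thesis by (intro continuous_intros continuous_on_compose2[OF cvm]) auto
    qed
    then show ?thesis unfolding v_def by (rule continuous_on_norm)
  qed
  have bmm: "bor (\<mu> \<Otimes>\<^sub>M \<mu>)" by (intro bor_pair bor_mu[OF grp])
  have ivp: "integrable (\<mu> \<Otimes>\<^sub>M \<mu>) (\<lambda>p. norm (v p))"
    by (rule PP.P.integrable_const_bound[where B=1], rule AE_I2)
       (use vb bor_meas_cont[OF bmm cvp] in auto)
  have iF: "integrable (\<mu> \<Otimes>\<^sub>M \<mu>) (\<lambda>p. \<integral>\<nu>. F p \<nu> \<partial>gauss_tmpl)"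
    using PQ.integrable_fst'[OF Fi] by simp
  show ir: "integrable (\<mu> \<Otimes>\<^sub>M \<mu>) r"
  proof -
    have "integrable (\<mu> \<Otimes>\<^sub>M \<mu>) (\<lambda>p. (\<integral>\<nu>. F p \<nu> \<partial>gauss_tmpl) - s * (1 - PB) + norm (v p) * c)"
      using iF ivp by (intro Bochner_Integration.integrable_add Bochner_Integration.integrable_diff) auto
    then show ?thesis
      by (rule Bochner_Integration.integrable_cong[THEN iffD1, rotated 2]) (auto simp: inner)
  qed
  have "K_s \<mu> \<epsilon> x z = (\<integral>p. s * (1 - PB) - norm (v p) * c + r p \<partial>(\<mu> \<Otimes>\<^sub>M \<mu>))"
    unfolding step1 step2 by (rule Bochner_Integration.integral_cong[OF refl]) (rule inner)
  also have "\<dots> = s * (1 - PB) - c * (\<integral>p. norm (v p) \<partial>(\<mu> \<Otimes>\<^sub>M \<mu>)) + (\<integral>p. r p \<partial>(\<mu> \<Otimes>\<^sub>M \<mu>))"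
    using ivp ir by (simp add: PP.P.prob_space mult.commute)
  also have "c * (\<integral>p. norm (v p) \<partial>(\<mu> \<Otimes>\<^sub>M \<mu>)) = d_G \<mu> x z"
  proof -
    have "(\<integral>p. norm (v p) \<partial>(\<mu> \<Otimes>\<^sub>M \<mu>)) = (1/2) * (\<integral>p. norm (x v* fst p - z v* snd p) \<partial>(\<mu> \<Otimes>\<^sub>M \<mu>))"
      unfolding v_def by simp
    also have "\<dots> = (1/2) * (\<integral>g. (\<integral>g'. norm (g *v x - g' *v z) \<partial>\<mu>) \<partial>\<mu>)"
      by (simp add: dG_eq[OF grp nx nz])
    finally have e: "(\<integral>p. norm (v p) \<partial>(\<mu> \<Otimes>\<^sub>M \<mu>)) = (1/2) * (\<integral>g. (\<integral>g'. norm (g *v x - g' *v z) \<partial>\<mu>) \<partial>\<mu>)" .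
    have cc: "c * (1/2) = 1 / sqrt (2 * pi * real CARD('n))"
    proof -
      have "c * (1/2) = sqrt 2 / (2 * sqrt pi * sqrt (real CARD('n)))"
        unfolding c_def gsig_eq by (simp add: real_sqrt_divide)
      also have "\<dots> = 1 / (sqrt 2 * sqrt pi * sqrt (real CARD('n)))"
      proof -
        have "sqrt 2 * sqrt 2 = (2::real)" by simp
        then show ?thesis by (simp add: field_simps)
      qed
      finally show ?thesis by (simp add: real_sqrt_mult)
    qed
    show ?thesis unfolding e d_G_def using cc by (simp add: mult.assoc[symmetric])
  qed
  finally show "K_s \<mu> \<epsilon> x z = (s - d_G \<mu> x z) - s * measure gauss_tmpl {\<nu>::real^'n. s \<le> (norm \<nu>)\<^sup>2}
            + (\<integral>p. r p \<partial>(\<mu> \<Otimes>\<^sub>M \<mu>))"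
    unfolding PB_def BD_def by (simp add: algebra_simps)
qed

lemma ln_bound:
  fixes e :: real assumes e: "0 < e" "e < 1"
  shows "ln (1 + e) \<le> e - e\<^sup>2 / 4"
proof -
  define y where "y = e - e\<^sup>2 / 4"
  have ee: "e * e \<le> e * 1" using e by (intro mult_left_mono) auto
  have y34: "y \<ge> 3/4 * e" unfolding y_def using ee by (simp add: power2_eq_square)
  have y0: "y \<ge> 0" using y34 e by simp
  have "(3/4 * e)\<^sup>2 \<le> y\<^sup>2" using y34 e by (intro power_mono) auto
  moreover have "(3/4 * e)\<^sup>2 = 9/16 * e\<^sup>2" by (simp add: power_mult_distrib power2_eq_square)
  moreover have "e\<^sup>2 \<ge> 0" by simp
  moreover have yd: "y = e - e\<^sup>2 / 4" by (simp add: y_def)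
  ultimately have "1 + e \<le> 1 + y + y\<^sup>2 / 2" by linarith
  also have "\<dots> \<le> exp y" by (rule exp_lower_Taylor_quadratic[OF y0])
  finally have "ln (1 + e) \<le> ln (exp y)" using e by (subst ln_le_cancel_iff) auto
  then show ?thesis by (simp add: y_def)
qed

lemma chernoff_num:
  fixes e d :: real assumes e: "0 < e" "e < 1" and d: "d \<ge> 0"
  shows "(1 + e) powr (d / 2) * exp (- d * e / 2) \<le> exp (- d * e\<^sup>2 / 8)"
proof -
  have "(1 + e) powr (d / 2) = exp (d / 2 * ln (1 + e))" using e by (simp add: powr_def)
  also have "\<dots> \<le> exp (d / 2 * (e - e\<^sup>2 / 4))"
    using ln_bound[OF e] d by (simp add: mult_left_mono)
  finally have "(1 + e) powr (d / 2) * exp (- d * e / 2) \<le> exp (d / 2 * (e - e\<^sup>2 / 4)) * exp (- d * e / 2)"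
    by (simp add: mult_right_mono)
  also have "\<dots> = exp (- d * e\<^sup>2 / 8)" by (simp add: exp_add[symmetric] field_simps)
  finally show ?thesis .
qed

lemma delta2_bound:
  fixes e :: real and n :: nat assumes e: "0 < e" "e < 1"
  shows "(1 + e) * ((1 + e) powr (real n / 2) * exp (- real n * e / 2)) \<le> delta2 n e"
proof -
  have "(1 + e) * ((1 + e) powr (real n / 2) * exp (- real n * e / 2)) \<le> (1 + e) * exp (- real n * e\<^sup>2 / 8)"
    using chernoff_num[OF e, of "real n"] e by (intro mult_left_mono) auto
  also have "\<dots> \<le> delta2 n e" unfolding delta2_def by simp
  finally show ?thesis .
qed

lemma delta1_bound:
  fixes e :: real and n :: nat and s :: real
  assumes e: "0 < e" "e < 1" and n: "n \<ge> 2" and s: "s \<ge> 1"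
  shows "2 * exp (- s\<^sup>2 * real n / 2) / (exp 1 * s * real n) \<le> delta1 n e"
proof -
  define d where "d = real n"
  have d2: "d \<ge> 2" using n unfolding d_def by simp
  define A where "A = exp (- d * e\<^sup>2 / 16)"
  define B where "B = exp (- e * d / 2) * (1 + e) powr (d / 2)"
  have B: "B \<le> A"
  proof -
    have "B \<le> exp (- d * e\<^sup>2 / 8)" unfolding B_def using chernoff_num[OF e, of d] d2 by (simp add: mult.commute)
    also have "\<dots> \<le> A" unfolding A_def using d2 by simp
    finally show ?thesis .
  qed
  have sd: "sqrt d > 0" using d2 by simp
  have "A / sqrt d / 2 \<le> delta1 n e"
  proof -
    have "delta1 n e = A / sqrt d - 1/2 * B / sqrt d" unfolding delta1_def A_def B_def d_def by simp
    moreover have "B / sqrt d \<le> A / sqrt d" using B sd by (simp add: divide_right_mono)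
    ultimately show ?thesis by simp
  qed
  moreover have "2 * exp (- s\<^sup>2 * d / 2) / (exp 1 * s * d) \<le> A / sqrt d / 2"
  proof -
    have s2: "s\<^sup>2 \<ge> 1" using s by (simp add: one_le_power)
    have "2 * exp (- s\<^sup>2 * d / 2) / (exp 1 * s * d) \<le> 2 * exp (- d / 2) / (exp 1 * d)"
    proof -
      have "exp (- s\<^sup>2 * d / 2) \<le> exp (- d / 2)" using s2 d2 by (simp add: mult_right_mono)
      moreover have "exp 1 * d \<le> exp 1 * s * d" using s d2 by (simp add: mult_right_mono)
      ultimately show ?thesis using d2 by (intro frac_le) auto
    qed
    also have "\<dots> \<le> A / sqrt d / 2"
    proof -
      have A0: "exp (- d / 16) \<le> A" unfolding A_def
      proof (subst exp_le_cancel_iff)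
        have "e\<^sup>2 \<le> 1" using e by (simp add: power_le_one)
        then show "- d / 16 \<le> - d * e\<^sup>2 / 16" using d2 by (simp add: mult_left_mono)
      qed
      have q: "4 \<le> exp (15 / 8 :: real)"
        using exp_lower_Taylor_quadratic[of "15/8::real"] by (simp add: power2_eq_square)
      have "4 * exp (- d * 7 / 16) \<le> 4 * exp (- 7 / 8 :: real)" using d2 by simp
      also have "\<dots> \<le> exp 1"
      proof -
        have "exp (15 / 8 :: real) = exp 1 * exp (7/8)" by (simp add: exp_add[symmetric])
        then show ?thesis using q by (simp add: exp_minus field_simps)
      qed
      also have "\<dots> \<le> exp 1 * sqrt d" using d2 by simp
      finally have k: "4 * exp (- d * 7 / 16) \<le> exp 1 * sqrt d" .
      have "2 * exp (- d / 2) / (exp 1 * d) = (4 * exp (- d * 7 / 16)) * exp (- d / 16) / (2 * exp 1 * sqrt d * sqrt d)"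
        using d2 by (simp add: exp_add[symmetric] field_simps)
      also have "\<dots> \<le> (exp 1 * sqrt d) * exp (- d / 16) / (2 * exp 1 * sqrt d * sqrt d)"
        using k sd by (intro divide_right_mono mult_right_mono) auto
      also have "\<dots> = exp (- d / 16) / sqrt d / 2" using sd by (simp add: field_simps)
      also have "\<dots> \<le> A / sqrt d / 2" using A0 sd by (simp add: divide_right_mono)
      finally show ?thesis .
    qed
    finally show ?thesis .
  qed
  ultimately show ?thesis unfolding d_def by simp
qed

lemma K_bounds:
  fixes G :: "(real^'n^'n) set" and x z :: "real^'n"
  assumes grp: "orth_group_haar G \<mu>" and nx: "norm x \<le> 1" and nz: "norm z \<le> 1"
    and e: "0 < \<epsilon>" "\<epsilon> < 1" and dim: "CARD('n) \<ge> 2"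
  shows "- delta2 CARD('n) \<epsilon> \<le> K_s \<mu> \<epsilon> x z - ((1 + \<epsilon>) - d_G \<mu> x z)"
    and "K_s \<mu> \<epsilon> x z - ((1 + \<epsilon>) - d_G \<mu> x z) \<le> delta1 CARD('n) \<epsilon>"
proof -
  note Bs = haar_basic[OF grp]
  interpret P: prob_space \<mu> by (rule Bs(1))
  interpret PP: pair_prob_space \<mu> \<mu> by unfold_locales
  interpret Q: prob_space "gauss_tmpl :: (real^'n) measure" by (rule prob_space_gauss)
  define s where "s = 1 + \<epsilon>"
  have s1: "s > 1" using e unfolding s_def by simp
  define v where "v = (\<lambda>p::(real^'n^'n) \<times> (real^'n^'n). (1/2) *\<^sub>R (x v* fst p - z v* snd p))"
  define BD where "BD = {\<nu>::real^'n. s \<le> (norm \<nu>)\<^sup>2}"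
  have BDm[measurable]: "BD \<in> sets borel" unfolding BD_def by measurable
  define r where "r = (\<lambda>p. \<integral>\<nu>. indicator BD \<nu> * \<bar>v p \<bullet> \<nu>\<bar> \<partial>gauss_tmpl)"
  define PB where "PB = measure (gauss_tmpl :: (real^'n) measure) BD"
  define T where "T = 2 * exp (- s\<^sup>2 * real CARD('n) / 2) / (exp 1 * s * real CARD('n))"
  note KM = K_main[OF grp nx nz e(1)]
  have Keq: "K_s \<mu> \<epsilon> x z - ((1 + \<epsilon>) - d_G \<mu> x z) = - s * PB + (\<integral>p. r p \<partial>(\<mu> \<Otimes>\<^sub>M \<mu>))"
    using KM(1) unfolding r_def v_def BD_def PB_def s_def by (simp add: algebra_simps)
  have ir: "integrable (\<mu> \<Otimes>\<^sub>M \<mu>) r"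
    using KM(2) unfolding r_def v_def BD_def s_def by simp
  have vb: "p \<in> space (\<mu> \<Otimes>\<^sub>M \<mu>) \<Longrightarrow> norm (v p) \<le> 1" for p
    using KM(3) unfolding v_def by blast
  have r0: "r p \<ge> 0" for p unfolding r_def by (rule integral_nonneg_AE) (auto intro!: AE_I2)
  have PBb: "PB \<le> s powr (real CARD('n) / 2) * exp (- real CARD('n) * (s - 1) / 2)"
    unfolding PB_def BD_def by (rule gauss_chernoff[OF s1])
  have sPB: "s * PB \<le> delta2 CARD('n) \<epsilon>"
  proof -
    have "s * PB \<le> s * (s powr (real CARD('n) / 2) * exp (- real CARD('n) * (s - 1) / 2))"
      using PBb s1 by (intro mult_left_mono) auto
    also have "\<dots> \<le> delta2 CARD('n) \<epsilon>" using delta2_bound[OF e, of "CARD('n)"] unfolding s_def by simp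
    finally show ?thesis .
  qed
  show "- delta2 CARD('n) \<epsilon> \<le> K_s \<mu> \<epsilon> x z - ((1 + \<epsilon>) - d_G \<mu> x z)"
  proof -
    have "0 \<le> (\<integral>p. r p \<partial>(\<mu> \<Otimes>\<^sub>M \<mu>))" by (rule integral_nonneg_AE) (auto intro!: AE_I2 r0)
    then show ?thesis unfolding Keq using sPB by simp
  qed
  have rT: "r p \<le> s * PB + T" if p: "p \<in> space (\<mu> \<Otimes>\<^sub>M \<mu>)" for p
  proof -
    have i1: "integrable gauss_tmpl (\<lambda>\<nu>. indicator BD \<nu> * \<bar>v p \<bullet> \<nu>\<bar>)"
      by (rule gauss_int_ind[OF BDm, of _ "v p"]) auto
    have i2: "integrable gauss_tmpl (\<lambda>\<nu>. indicator BD \<nu> * s)"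
      by (rule Q.integrable_const_bound[where B=s], rule AE_I2) (use s1 in \<open>auto simp: indicator_def\<close>)
    note GT = gauss_tail[OF vb[OF p], of s]
    have "r p - s * PB = (\<integral>\<nu>. indicator BD \<nu> * \<bar>v p \<bullet> \<nu>\<bar> - indicator BD \<nu> * s \<partial>gauss_tmpl)"
      unfolding r_def PB_def using i1 i2 by (simp add: mult.commute)
    also have "\<dots> \<le> (\<integral>\<nu>. max 0 (\<bar>v p \<bullet> \<nu>\<bar> - s) \<partial>gauss_tmpl)"
      by (rule integral_mono) (use i1 i2 GT s1 in \<open>auto simp: indicator_def\<close>)
    also have "\<dots> \<le> T" unfolding T_def using GT s1 by simp
    finally show ?thesis by simp
  qed
  have "(\<integral>p. r p \<partial>(\<mu> \<Otimes>\<^sub>M \<mu>)) \<le> (\<integral>p. s * PB + T \<partial>(\<mu> \<Otimes>\<^sub>M \<mu>))"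
    by (rule integral_mono_AE[OF ir]) (auto intro!: AE_I2 rT)
  also have "\<dots> = s * PB + T" by (simp add: PP.P.prob_space)
  finally have "K_s \<mu> \<epsilon> x z - ((1 + \<epsilon>) - d_G \<mu> x z) \<le> T" unfolding Keq by simp
  also have "T \<le> delta1 CARD('n) \<epsilon>" unfolding T_def by (rule delta1_bound[OF e dim]) (use s1 in simp)
  finally show "K_s \<mu> \<epsilon> x z - ((1 + \<epsilon>) - d_G \<mu> x z) \<le> delta1 CARD('n) \<epsilon>" .
qed

lemma inv_sqrt_lim: "(\<lambda>d::nat. 1 / sqrt (real d)) \<longlonglongrightarrow> 0"
proof -
  have "(\<lambda>d::nat. inverse (sqrt (real d))) \<longlonglongrightarrow> 0"
    by (rule tendsto_inverse_0_at_top, rule filterlim_compose[OF sqrt_at_top filterlim_real_sequentially])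
  then show ?thesis by (simp add: divide_inverse)
qed

lemma exp_lin_lim: "c > 0 \<Longrightarrow> (\<lambda>d::nat. exp (- real d * c)) \<longlonglongrightarrow> 0"
proof -
  assume c: "c > 0"
  have "filterlim (\<lambda>d::nat. - real d * c) at_bot sequentially"
    using filterlim_tendsto_pos_mult_at_top[OF tendsto_const c filterlim_real_sequentially]
    by (simp add: filterlim_uminus_at_top mult.commute)
  then show ?thesis by (rule filterlim_compose[OF exp_at_bot])
qed

lemma delta_limits:
  assumes e: "0 < e" "e < 1"
  shows "(\<lambda>d. delta1 d e) \<longlonglongrightarrow> 0" "(\<lambda>d. delta2 d e) \<longlonglongrightarrow> 0"
proof -
  have T1: "(\<lambda>d::nat. exp (- real d * e\<^sup>2 / 16) / sqrt (real d)) \<longlonglongrightarrow> 0"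
  proof (rule tendsto_sandwich[OF _ _ tendsto_const inv_sqrt_lim])
    show "\<forall>\<^sub>F d in sequentially. 0 \<le> exp (- real d * e\<^sup>2 / 16) / sqrt (real d)" by simp
    show "\<forall>\<^sub>F d in sequentially. exp (- real d * e\<^sup>2 / 16) / sqrt (real d) \<le> 1 / sqrt (real d)"
      by (intro always_eventually allI divide_right_mono) (auto simp: mult_nonneg_nonneg)
  qed
  have T2: "(\<lambda>d::nat. 1/2 * (exp (- e * real d / 2) * (1 + e) powr (real d / 2)) / sqrt (real d)) \<longlonglongrightarrow> 0"
  proof (rule tendsto_sandwich[OF _ _ tendsto_const inv_sqrt_lim])
    show "\<forall>\<^sub>F d in sequentially. 0 \<le> 1/2 * (exp (- e * real d / 2) * (1 + e) powr (real d / 2)) / sqrt (real d)"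
      by simp
    show "\<forall>\<^sub>F d in sequentially. 1/2 * (exp (- e * real d / 2) * (1 + e) powr (real d / 2)) / sqrt (real d) \<le> 1 / sqrt (real d)"
    proof (intro always_eventually allI divide_right_mono)
      fix d :: nat
      have "(1 + e) powr (real d / 2) * exp (- real d * e / 2) \<le> exp (- real d * e\<^sup>2 / 8)"
        by (rule chernoff_num[OF e]) simp
      also have "\<dots> \<le> 1" by (simp add: mult_nonneg_nonneg)
      finally show "1/2 * (exp (- e * real d / 2) * (1 + e) powr (real d / 2)) \<le> 1"
        by (simp add: mult.commute)
    qed simp
  qed
  show "(\<lambda>d. delta1 d e) \<longlonglongrightarrow> 0"
    unfolding delta1_def using tendsto_diff[OF T1 T2] by simp
  have T3: "(\<lambda>d::nat. (1 + e) * exp (- real d * e\<^sup>2 / 8)) \<longlonglongrightarrow> 0"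
    using tendsto_mult_right_zero[OF exp_lin_lim[of "e\<^sup>2/8"], of "1+e"] e by (simp add: mult.assoc)
  show "(\<lambda>d. delta2 d e) \<longlonglongrightarrow> 0"
    unfolding delta2_def using tendsto_add[OF T1 T3] by simp
qed

lemma K_sym: "K_s \<mu> \<epsilon> x z = K_s \<mu> \<epsilon> z x"
  unfolding K_s_def by (simp add: mult.commute)

lemma psi_inv:
  fixes G :: "(real^'n^'n) set"
  assumes grp: "orth_group_haar G \<mu>" and g: "g \<in> G"
  shows "psi \<mu> (g *v x) t \<tau> = psi \<mu> x t \<tau>"
proof (cases t)
  case None
  then show ?thesis by simp
next
  case (Some t)
  note Bs = haar_basic[OF grp]
  define g' where "g' = transpose g"
  have g': "g' \<in> G" unfolding g'_def using Bs(8)[OF g] .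
  have e: "(g *v x) \<bullet> (h *v t) = x \<bullet> ((g' ** h) *v t)" for h
  proof -
    have "g *v x = x v* g'" unfolding g'_def by (metis transpose_matrix_vector transpose_transpose)
    then show ?thesis by (simp add: dot_lmul_matrix matrix_vector_mul_assoc)
  qed
  have bm: "bor \<mu>" by (rule bor_mu[OF grp])
  have ca: "continuous_on UNIV (\<lambda>h::real^'n^'n. x \<bullet> (h *v t))"
    using continuous_on_compose2[OF cont_mv, of UNIV "\<lambda>h. (h, t)"] by (simp add: continuous_intros)
  have [measurable]: "(\<lambda>h::real^'n^'n. x \<bullet> (h *v t)) \<in> borel_measurable \<mu>" by (rule bor_meas_cont[OF bm ca])
  define S where "S = {h \<in> space \<mu>. x \<bullet> (h *v t) \<le> \<tau>}"
  have S: "S \<in> sets \<mu>" unfolding S_def by measurable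
  have "measure \<mu> S = measure (distr \<mu> \<mu> (\<lambda>h. g' ** h)) S"
    using haar_left(2)[OF grp g'] by simp
  also have "\<dots> = measure \<mu> ((\<lambda>h. g' ** h) -` S \<inter> space \<mu>)"
    by (rule measure_distr[OF haar_left(1)[OF grp g'] S])
  also have "(\<lambda>h. g' ** h) -` S \<inter> space \<mu> = {h \<in> space \<mu>. (g *v x) \<bullet> (h *v t) \<le> \<tau>}"
    unfolding S_def e using Bs(2) Bs(7)[OF g'] by auto
  finally show ?thesis using Some S_def by simp
qed

lemma K_inv:
  fixes G :: "(real^'n^'n) set"
  assumes grp: "orth_group_haar G \<mu>" and g: "g \<in> G" and g': "g' \<in> G"
  shows "K_s \<mu> \<epsilon> (g *v x) (g' *v z) = K_s \<mu> \<epsilon> x z"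
  unfolding K_s_def psi_inv[OF grp g] psi_inv[OF grp g'] ..

lemma psi_props:
  fixes G :: "(real^'n^'n) set"
  assumes grp: "orth_group_haar G \<mu>"
  shows "(\<lambda>\<tau>. psi \<mu> y t \<tau>) \<in> borel_measurable borel" "0 \<le> psi \<mu> y t \<tau>" "psi \<mu> y t \<tau> \<le> 1"
proof -
  note Bs = haar_basic[OF grp]
  interpret P: prob_space \<mu> by (rule Bs(1))
  show "0 \<le> psi \<mu> y t \<tau>" by (cases t) auto
  show "psi \<mu> y t \<tau> \<le> 1" by (cases t) (auto intro: P.prob_le_1)
  show "(\<lambda>\<tau>. psi \<mu> y t \<tau>) \<in> borel_measurable borel"
  proof (cases t)
    case None
    then show ?thesis by simp
  next
    case (Some t)
    have bm: "bor \<mu>" by (rule bor_mu[OF grp])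
    have ca: "continuous_on UNIV (\<lambda>h::real^'n^'n. y \<bullet> (h *v t))"
      using continuous_on_compose2[OF cont_mv, of UNIV "\<lambda>h. (h, t)"] by (simp add: continuous_intros)
    have [measurable]: "(\<lambda>h::real^'n^'n. y \<bullet> (h *v t)) \<in> borel_measurable \<mu>" by (rule bor_meas_cont[OF bm ca])
    have "mono (\<lambda>\<tau>. measure \<mu> {h \<in> space \<mu>. y \<bullet> (h *v t) \<le> \<tau>})"
      by (rule monoI, rule P.finite_measure_mono) auto
    then show ?thesis using Some by (simp add: borel_measurable_mono)
  qed
qed

lemma psd_pointwise:
  fixes G :: "(real^'n^'n) set" and y :: "nat \<Rightarrow> real^'n" and c :: "nat \<Rightarrow> real" and s :: real
  assumes grp: "orth_group_haar G \<mu>" and s: "s \<ge> 0"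
  shows "0 \<le> (\<Sum>i<m. \<Sum>j<m. c i * c j * (LBINT \<tau>=-s..s. psi \<mu> (y i) t \<tau> * psi \<mu> (y j) t \<tau>))"
proof -
  define S where "S = {-s..s}"
  define f where "f i \<tau> = psi \<mu> (y i) t \<tau>" for i \<tau>
  have fm[measurable]: "f i \<in> borel_measurable borel" for i
    unfolding f_def using psi_props(1)[OF grp] by simp
  have fb: "0 \<le> f i \<tau>" "f i \<tau> \<le> 1" for i \<tau> unfolding f_def using psi_props(2,3)[OF grp] by auto
  have iS: "integrable lborel (indicator S :: real \<Rightarrow> real)"
    unfolding S_def by (rule integrable_real_indicator) (use s in \<open>auto simp: emeasure_lborel_Icc_eq\<close>)
  have ij: "integrable lborel (\<lambda>\<tau>. indicator S \<tau> * (f i \<tau> * f j \<tau>))" for i j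
  proof (rule Bochner_Integration.integrable_bound[OF iS])
    show "(\<lambda>\<tau>. indicator S \<tau> * (f i \<tau> * f j \<tau>)) \<in> borel_measurable lborel"
      unfolding S_def by measurable
    show "AE \<tau> in lborel. norm (indicator S \<tau> * (f i \<tau> * f j \<tau>)) \<le> norm (indicator S \<tau> :: real)"
    proof (rule AE_I2)
      fix \<tau>
      have "f i \<tau> * f j \<tau> \<le> 1 * 1" using fb by (intro mult_mono) auto
      then show "norm (indicator S \<tau> * (f i \<tau> * f j \<tau>)) \<le> norm (indicator S \<tau> :: real)"
        using fb[of i \<tau>] fb[of j \<tau>] by (auto simp: indicator_def)
    qed
  qed
  have L: "(LBINT \<tau>=-s..s. f i \<tau> * f j \<tau>) = (\<integral>\<tau>. indicator S \<tau> * (f i \<tau> * f j \<tau>) \<partial>lborel)" for i j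
    using s unfolding S_def by (simp add: interval_integral_Icc set_lebesgue_integral_def)
  have "(\<Sum>i<m. \<Sum>j<m. c i * c j * (LBINT \<tau>=-s..s. f i \<tau> * f j \<tau>))
      = (\<Sum>i<m. \<Sum>j<m. (\<integral>\<tau>. c i * c j * (indicator S \<tau> * (f i \<tau> * f j \<tau>)) \<partial>lborel))"
    unfolding L by simp
  also have "\<dots> = (\<Sum>i<m. (\<integral>\<tau>. (\<Sum>j<m. c i * c j * (indicator S \<tau> * (f i \<tau> * f j \<tau>))) \<partial>lborel))"
    by (intro sum.cong refl integral_sum[symmetric]) (use ij in auto)
  also have "\<dots> = (\<integral>\<tau>. (\<Sum>i<m. \<Sum>j<m. c i * c j * (indicator S \<tau> * (f i \<tau> * f j \<tau>))) \<partial>lborel)"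
    by (rule Bochner_Integration.integral_sum[where I="{..<m}" and f="\<lambda>i \<tau>. \<Sum>j<m. c i * c j * (indicator S \<tau> * (f i \<tau> * f j \<tau>))", symmetric])
       (auto intro!: Bochner_Integration.integrable_sum ij)
  also have "\<dots> = (\<integral>\<tau>. indicator S \<tau> * (\<Sum>i<m. c i * f i \<tau>)\<^sup>2 \<partial>lborel)"
  proof (rule Bochner_Integration.integral_cong[OF refl])
    fix \<tau>
    have "(\<Sum>i<m. c i * f i \<tau>)\<^sup>2 = (\<Sum>i<m. \<Sum>j<m. (c i * f i \<tau>) * (c j * f j \<tau>))"
      by (simp add: power2_eq_square sum_product)
    then show "(\<Sum>i<m. \<Sum>j<m. c i * c j * (indicator S \<tau> * (f i \<tau> * f j \<tau>))) = indicator S \<tau> * (\<Sum>i<m. c i * f i \<tau>)\<^sup>2"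
      by (simp add: sum_distrib_left algebra_simps)
  qed
  also have "0 \<le> \<dots>" by (rule integral_nonneg_AE) (auto intro!: AE_I2)
  finally show ?thesis by (simp add: f_def)
qed

lemma K_psd:
  fixes G :: "(real^'n^'n) set" and y :: "nat \<Rightarrow> real^'n" and c :: "nat \<Rightarrow> real"
  assumes grp: "orth_group_haar G \<mu>" and e: "\<epsilon> > 0" and y: "\<forall>i<m. norm (y i) \<le> 1"
  shows "0 \<le> (\<Sum>i<m. \<Sum>j<m. c i * c j * K_s \<mu> \<epsilon> (y i) (y j))"
proof -
  define \<Phi> where "\<Phi> i j \<nu> = (LBINT \<tau>=-(1+\<epsilon>)..(1+\<epsilon>). psi \<mu> (y i) (template \<epsilon> \<nu>) \<tau> * psi \<mu> (y j) (template \<epsilon> \<nu>) \<tau>)"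
    for i j and \<nu> :: "real^'n"
  have iP: "integrable gauss_tmpl (\<Phi> i j)" if "i < m" "j < m" for i j
    unfolding \<Phi>_def using K_main(4)[OF grp _ _ e, of "y i" "y j"] y that by auto
  have "(\<Sum>i<m. \<Sum>j<m. c i * c j * K_s \<mu> \<epsilon> (y i) (y j))
      = (\<Sum>i<m. \<Sum>j<m. (\<integral>\<nu>. c i * c j * \<Phi> i j \<nu> \<partial>gauss_tmpl))"
    unfolding K_s_def \<Phi>_def by simp
  also have "\<dots> = (\<Sum>i<m. (\<integral>\<nu>. (\<Sum>j<m. c i * c j * \<Phi> i j \<nu>) \<partial>gauss_tmpl))"
    by (intro sum.cong refl integral_sum[symmetric]) (use iP in auto)
  also have "\<dots> = (\<integral>\<nu>. (\<Sum>i<m. \<Sum>j<m. c i * c j * \<Phi> i j \<nu>) \<partial>gauss_tmpl)"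
    by (rule Bochner_Integration.integral_sum[where I="{..<m}" and f="\<lambda>i \<nu>. \<Sum>j<m. c i * c j * \<Phi> i j \<nu>", symmetric])
       (auto intro!: Bochner_Integration.integrable_sum iP)
  also have "0 \<le> \<dots>"
    by (rule integral_nonneg_AE, rule AE_I2) (use psd_pointwise[OF grp, of "1+\<epsilon>"] e in \<open>auto simp: \<Phi>_def\<close>)
  finally show ?thesis .
qed

theorem theorem1:
  fixes G :: "(real^'n^'n) set" and \<mu> :: "(real^'n^'n) measure"
    and X :: "(real^'n) set" and \<epsilon> :: real and x z :: "real^'n"
  assumes dim: "CARD('n) \<ge> 2"
    and grp: "orth_group_haar G \<mu>"
    and X: "X \<subseteq> sphere 0 1"
    and eps: "0 < \<epsilon>" "\<epsilon> < 1"
    and xz: "x \<in> X" "z \<in> X"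
  shows
    \<comment> \<open>(1)\<close>
    "(\<epsilon> - delta2 CARD('n) \<epsilon> \<le> K_s \<mu> \<epsilon> x z - (1 - d_G \<mu> x z) \<and>
      K_s \<mu> \<epsilon> x z - (1 - d_G \<mu> x z) \<le> \<epsilon> + delta1 CARD('n) \<epsilon>)
     \<comment> \<open>(2)\<close>
     \<and> ((\<lambda>d. delta1 d \<epsilon>) \<longlonglongrightarrow> 0) \<and> ((\<lambda>d. delta2 d \<epsilon>) \<longlonglongrightarrow> 0)
     \<and> (- delta2 CARD('n) \<epsilon> \<le> K_s \<mu> \<epsilon> x z - ((1 + \<epsilon>) - d_G \<mu> x z) \<and>
        K_s \<mu> \<epsilon> x z - ((1 + \<epsilon>) - d_G \<mu> x z) \<le> delta1 CARD('n) \<epsilon>)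
     \<comment> \<open>(3)\<close>
     \<and> K_s \<mu> \<epsilon> x z = K_s \<mu> \<epsilon> z x
     \<and> (\<forall>(m::nat) (y :: nat \<Rightarrow> real^'n) (c :: nat \<Rightarrow> real).
          (\<forall>i<m. y i \<in> X) \<longrightarrow>
          0 \<le> (\<Sum>i<m. \<Sum>j<m. c i * c j * K_s \<mu> \<epsilon> (y i) (y j)))
     \<and> (\<forall>g\<in>G. \<forall>g'\<in>G. K_s \<mu> \<epsilon> (g *v x) (g' *v z) = K_s \<mu> \<epsilon> x z)"
proof -
  have unitX: "norm w \<le> 1" if "w \<in> X" for w
    using X that by auto
  have nx: "norm x \<le> 1" and nz: "norm z \<le> 1" using unitX xz by auto
  note KB = K_bounds[OF grp nx nz eps dim]
  note L = delta_limits[OF eps]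
  have psd: "\<forall>(m::nat) (y :: nat \<Rightarrow> real^'n) (c :: nat \<Rightarrow> real).
          (\<forall>i<m. y i \<in> X) \<longrightarrow>
          0 \<le> (\<Sum>i<m. \<Sum>j<m. c i * c j * K_s \<mu> \<epsilon> (y i) (y j))"
    using K_psd[OF grp eps(1)] unitX by blast
  have inv: "\<forall>g\<in>G. \<forall>g'\<in>G. K_s \<mu> \<epsilon> (g *v x) (g' *v z) = K_s \<mu> \<epsilon> x z"
    using K_inv[OF grp] by blast
  show ?thesis
    using KB L psd inv K_sym[of \<mu> \<epsilon> x z] by auto
qed

end
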